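(* Let $W(x,y)=1$ if $y+\frac12\le x$ or $x+\frac12\le y$, and $W(x,y)=0$ otherwise. This is the limit graphon of the half graphs. Then every minimizer $\theta$ of $J$ on $H$ takes values in $\{0,1\}$ for a.e. $x\in[0,1]$.
   Context: For a graphon $W:[0,1]^2\to[0,1]$ (measurable, symmetric), the limiting bisection cut functional is $J(\theta)=8\int_{[0,1]^2}W(x,y)\theta(x)(1-\theta(y))\,dx\,dy$ for measurable $\theta:[0,1]\to[0,1]$. The constraint set is $H=\{\theta:[0,1]\to[0,1]\text{ measurable}:\int_0^1\theta=1/2\}$. *)

theory Defs
  imports "HOL-Analysis.Analysis"
begin

definition halfW :: "real \<Rightarrow> real \<Rightarrow> real" where
  "halfW x y = (if y + 1/2 \<le> x \<or> x + 1/2 \<le> y then 1 else 0)"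

definition cutJ :: "(real \<Rightarrow> real \<Rightarrow> real) \<Rightarrow> (real \<Rightarrow> real) \<Rightarrow> real" where
  "cutJ W \<theta> = 8 * (LINT z : {0..1} \<times> {0..1} | (lebesgue \<Otimes>\<^sub>M lebesgue).
                        W (fst z) (snd z) * \<theta> (fst z) * (1 - \<theta> (snd z)))"

definition bisectH :: "(real \<Rightarrow> real) set" where
  "bisectH = {\<theta>. \<theta> \<in> borel_measurable lebesgue \<and>
                 (\<forall>x\<in>{0..1}. 0 \<le> \<theta> x \<and> \<theta> x \<le> 1) \<and>
                 (LINT x : {0..1} | lebesgue. \<theta> x) = 1/2}"

end

theory Submission
  imports Defs
begin

lemma density_interval:
  fixes P :: "real set"
  assumes Pm: "P \<in> sets lebesgue" and Psub: "P \<subseteq> {0..1}" and Ppos: "measure lebesgue P > 0"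
    and eta: "0 < \<eta>" "\<eta> < 1"
  shows "\<exists>p q. p < q \<and> measure lebesgue (P \<inter> {p..q}) \<ge> (1-\<eta>)*(q-p)"
proof (rule ccontr)
  assume neg: "\<not> ?thesis"
  have neg': "measure lebesgue (P \<inter> {p..q}) < (1-\<eta>)*(q-p)" if "p < q" for p q
    using neg that by force
  define \<mu> where "\<mu> = measure lebesgue P"
  define e where "e = \<eta> * \<mu> / 4"
  have e0: "e > 0" using eta Ppos by (simp add: e_def \<mu>_def)
  have bI: "bounded {0::real..1}" by simp
  have Pl: "P \<in> lmeasurable"
    using Pm Psub bI by (meson bounded_subset bounded_set_imp_lmeasurable)
  obtain T where T: "open T" "P \<subseteq> T" "(T - P) \<in> lmeasurable" "emeasure lebesgue (T - P) < ennreal e"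
    using sets_lebesgue_outer_open[OF Pm e0] by blast
  obtain K where K: "closed K" "K \<subseteq> P" "P - K \<in> lmeasurable" "emeasure lebesgue (P - K) < ennreal e"
    using sets_lebesgue_inner_closed[OF Pm e0] by blast
  have Kc: "compact K" using K Psub bI
    by (meson bounded_subset compact_eq_bounded_closed order_trans)
  have Km: "K \<in> sets lebesgue" using K by (simp add: borel_closed)
  have Kl: "K \<in> lmeasurable" using Km K(2) Pl fmeasurableI2 by blast
  have TP: "measure lebesgue (T - P) < e"
    using T(3,4) by (simp add: emeasure_eq_measure2 e0 less_le_not_le)
  have PK: "measure lebesgue (P - K) < e"
    using K(3,4) by (simp add: emeasure_eq_measure2 e0 less_le_not_le)
  have Tl: "T \<in> lmeasurable"
  proof -
    have "P \<union> (T - P) = T" using T(2) by blast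
    then show ?thesis using fmeasurable.Un[OF Pl T(3)] by simp
  qed
  have Tmeas: "measure lebesgue T \<le> \<mu> + measure lebesgue (T - P)"
  proof -
    have "P \<union> (T - P) = T" using T(2) by blast
    then show ?thesis using measure_Un_le[of P lebesgue "T - P"] Pm T(3) unfolding \<mu>_def
      by (simp add: fmeasurableD)
  qed
  have Kmeas: "\<mu> - e < measure lebesgue K"
  proof -
    have "\<mu> \<le> measure lebesgue K + measure lebesgue (P - K)"
    proof -
      have "K \<union> (P - K) = P" using K(2) by blast
      then show ?thesis using measure_Un_le[of K lebesgue "P - K"] Km K(3) unfolding \<mu>_def
        by (simp add: fmeasurableD)
    qed
    then show ?thesis using PK by linarith
  qed
  obtain \<delta> where \<delta>: "\<delta> > 0" "(\<Union>x\<in>K. ball x \<delta>) \<subseteq> T"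
    using compact_subset_open_imp_ball_epsilon_subset[OF Kc T(1)] K(2) T(2) by blast
  define h where "h = \<delta> / 2"
  have h0: "h > 0" using \<delta> by (simp add: h_def)
  define I where "I = (\<lambda>k::int. {real_of_int k * h ..< (real_of_int k + 1) * h})"
  define \<K> where "\<K> = (\<lambda>x. \<lfloor>x / h\<rfloor>) ` K"
  have inI: "x \<in> I \<lfloor>x / h\<rfloor>" for x
  proof -
    have "real_of_int \<lfloor>x / h\<rfloor> * h \<le> x" "x < (real_of_int \<lfloor>x / h\<rfloor> + 1) * h"
      using h0 floor_divide_lower floor_divide_upper by blast+
    then show ?thesis unfolding I_def by auto
  qed
  have Kfin: "finite \<K>"
  proof -
    have "\<K> \<subseteq> {0..\<lfloor>1/h\<rfloor>}"
    proof
      fix k assume "k \<in> \<K>"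
      then obtain x where x: "x \<in> K" "k = \<lfloor>x/h\<rfloor>" unfolding \<K>_def by blast
      then have "0 \<le> x" "x \<le> 1" using K(2) Psub by auto
      then have "0 \<le> x / h" "x / h \<le> 1 / h" using h0 by (auto simp: divide_right_mono)
      then show "k \<in> {0..\<lfloor>1/h\<rfloor>}" using x by (auto intro: floor_mono)
    qed
    then show ?thesis using finite_subset by blast
  qed
  have KsubI: "K \<subseteq> (\<Union>k\<in>\<K>. I k)" using inI unfolding \<K>_def by blast
  have IsubT: "I k \<subseteq> T" if kK: "k \<in> \<K>" for k
  proof
    fix y assume y: "y \<in> I k"
    obtain x where x: "x \<in> K" "k = \<lfloor>x/h\<rfloor>" using kK unfolding \<K>_def by blast
    have "x \<in> I k" using inI x by simp
    then have "dist x y < \<delta>" using y h0 unfolding I_def h_def dist_real_def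
      by (auto simp: algebra_simps abs_less_iff)
    then have "y \<in> ball x \<delta>" by simp
    then show "y \<in> T" using \<delta>(2) x(1) by blast
  qed
  have disj: "disjoint_family_on I \<K>"
    unfolding disjoint_family_on_def
  proof (intro ballI impI)
    fix k l :: int assume "k \<noteq> l"
    then have "k + 1 \<le> l \<or> l + 1 \<le> k" by linarith
    then show "I k \<inter> I l = {}"
    proof
      assume "k + 1 \<le> l"
      then have "(real_of_int k + 1) * h \<le> real_of_int l * h"
        using h0 by (intro mult_right_mono) (simp_all flip: of_int_le_iff)
      then show ?thesis unfolding I_def by auto
    next
      assume "l + 1 \<le> k"
      then have "(real_of_int l + 1) * h \<le> real_of_int k * h"
        using h0 by (intro mult_right_mono) (simp_all flip: of_int_le_iff)
      then show ?thesis unfolding I_def by auto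
    qed
  qed
  have Imeas: "measure lebesgue (I k) = h" for k
    using h0 unfolding I_def by (simp add: algebra_simps)
  have Isets: "I k \<in> sets lebesgue" for k unfolding I_def by simp
  have Ifin: "emeasure lebesgue (I k) \<noteq> \<infinity>" for k
  proof -
    have "real_of_int k * h \<le> (real_of_int k + 1) * h" using h0 by (simp add: distrib_right)
    then show ?thesis unfolding I_def by simp
  qed
  have U1: "measure lebesgue (\<Union>k\<in>\<K>. I k) = (\<Sum>k\<in>\<K>. h)"
  proof -
    have "measure lebesgue (\<Union>k\<in>\<K>. I k) = (\<Sum>k\<in>\<K>. measure lebesgue (I k))"
      by (rule measure_finite_Union[OF Kfin _ disj]) (use Isets Ifin in auto)
    then show ?thesis using Imeas by simp
  qed
  have PIl: "P \<inter> I k \<in> lmeasurable" for k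
    using fmeasurableI2[OF Pl, of "P \<inter> I k"] Isets Pm by auto
  have U2: "measure lebesgue (\<Union>k\<in>\<K>. P \<inter> I k) = (\<Sum>k\<in>\<K>. measure lebesgue (P \<inter> I k))"
  proof (rule measure_finite_Union[OF Kfin])
    show "(\<lambda>k. P \<inter> I k) ` \<K> \<subseteq> sets lebesgue" using PIl by auto
    show "disjoint_family_on (\<lambda>k. P \<inter> I k) \<K>"
      using disj unfolding disjoint_family_on_def by blast
    show "emeasure lebesgue (P \<inter> I k) \<noteq> \<infinity>" for k
      using fmeasurableD2[OF PIl[of k]] by simp
  qed
  have small: "measure lebesgue (P \<inter> I k) \<le> (1-\<eta>) * h" for k
  proof -
    have "measure lebesgue (P \<inter> I k) \<le> measure lebesgue (P \<inter> {real_of_int k * h .. (real_of_int k + 1) * h})"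
      apply (rule measure_mono_fmeasurable)
      using Pm Pl unfolding I_def by (auto intro: fmeasurableI2)
    also have "\<dots> < (1-\<eta>) * ((real_of_int k + 1) * h - real_of_int k * h)"
      by (rule neg') (use h0 in \<open>simp add: distrib_right\<close>)
    finally show ?thesis by (simp add: algebra_simps)
  qed
  have "measure lebesgue K \<le> measure lebesgue (\<Union>k\<in>\<K>. P \<inter> I k)"
    apply (rule measure_mono_fmeasurable)
    using KsubI K(2) Km apply blast
     apply (simp add: Km)
    apply (rule fmeasurableI2[OF Pl]) using Isets Pm by auto
  also have "\<dots> \<le> (\<Sum>k\<in>\<K>. (1-\<eta>) * h)"
    unfolding U2 by (rule sum_mono) (rule small)
  also have "\<dots> = (1-\<eta>) * measure lebesgue (\<Union>k\<in>\<K>. I k)"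
    unfolding U1 by (simp add: sum_distrib_left)
  also have "\<dots> \<le> (1-\<eta>) * measure lebesgue T"
    apply (rule mult_left_mono)
     apply (rule measure_mono_fmeasurable)
    using IsubT Tl Isets eta by auto
  also have "\<dots> \<le> (1-\<eta>) * (\<mu> + e)"
    using Tmeas TP eta by (intro mult_left_mono) auto
  finally have "\<mu> - e < (1-\<eta>) * (\<mu> + e)" using Kmeas by linarith
  then have "\<eta> * \<mu> < (2 - \<eta>) * e" by (simp add: algebra_simps)
  moreover have "(2 - \<eta>) * e \<le> 2 * e" using eta e0 by simp
  ultimately show False using e0 unfolding e_def by linarith
qed


lemma sint_bdd:
  fixes f :: "'a \<Rightarrow> real"
  assumes "f \<in> borel_measurable M" "S \<in> sets M" "emeasure M S < \<infinity>" "\<And>x. x \<in> S \<Longrightarrow> \<bar>f x\<bar> \<le> C"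
  shows "set_integrable M S f"
proof -
  have "integrable M (\<lambda>x. C * indicator S x)"
    using integrable_real_indicator[OF assms(2,3)] by simp
  then show ?thesis unfolding set_integrable_def
    apply (rule Bochner_Integration.integrable_bound)
    using assms(1,2) apply (auto split: split_indicator)[1]
    using assms(4) by (auto intro!: AE_I2 split: split_indicator) (meson abs_ge_self order_trans)
qed

lemma fm_lt: "A \<in> fmeasurable M \<Longrightarrow> emeasure M A < \<infinity>"
  by (simp add: fmeasurable_def)

lemma meas_Un_disj:
  assumes "A \<in> fmeasurable M" "B \<in> fmeasurable M" "A \<inter> B = {}"
  shows "measure M (A \<union> B) = measure M A + measure M B"
  using measure_Un2[OF assms(1,2)] assms(3) by (metis Diff_triv inf_commute)

lemma sint_ge:
  fixes f :: "'a \<Rightarrow> real"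
  assumes "set_integrable M S f" "S \<in> sets M" "emeasure M S < \<infinity>" "\<And>x. x \<in> S \<Longrightarrow> c \<le> f x"
  shows "c * measure M S \<le> (LINT x:S|M. f x)"
proof -
  have "(LINT x:S|M. c) \<le> (LINT x:S|M. f x)"
    apply (rule set_integral_mono)
    using assms by (auto intro: sint_bdd[where C="\<bar>c\<bar>"])
  then show ?thesis using set_integral_const[of S M c] assms(2,3) by (simp add: mult.commute)
qed

lemma sint_le:
  fixes f :: "'a \<Rightarrow> real"
  assumes "set_integrable M S f" "S \<in> sets M" "emeasure M S < \<infinity>" "\<And>x. x \<in> S \<Longrightarrow> f x \<le> c"
  shows "(LINT x:S|M. f x) \<le> c * measure M S"
proof -
  have "(LINT x:S|M. f x) \<le> (LINT x:S|M. c)"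
    apply (rule set_integral_mono)
    using assms by (auto intro: sint_bdd[where C="\<bar>c\<bar>"])
  then show ?thesis using set_integral_const[of S M c] assms(2,3) by (simp add: mult.commute)
qed

lemma core_lemma:
  fixes E P :: "real set" and G F :: "real \<Rightarrow> real" and I :: "real \<Rightarrow> real \<Rightarrow> real set"
  assumes Pm: "P \<in> sets lebesgue" and PE: "P \<subseteq> E" and E01: "E \<subseteq> {0..1}"
    and Fm: "F \<in> borel_measurable lebesgue"
    and Gm: "G \<in> borel_measurable lebesgue" and Gb: "\<And>x. x \<in> E \<Longrightarrow> \<bar>G x\<bar> \<le> C"
    and exch: "\<And>A B. A \<subseteq> E \<Longrightarrow> B \<subseteq> E \<Longrightarrow> A \<in> sets lebesgue \<Longrightarrow> B \<in> sets lebesgue \<Longrightarrow>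
        measure lebesgue B * (LINT x:A|lebesgue. G x) = measure lebesgue A * (LINT x:B|lebesgue. G x)"
    and rel: "\<And>x y. x \<in> E \<Longrightarrow> y \<in> E \<Longrightarrow> x \<le> y \<Longrightarrow> G x - G y = (LINT z:I x y|lebesgue. F z)"
    and Isand: "\<And>x y. x \<in> E \<Longrightarrow> y \<in> E \<Longrightarrow> x \<le> y \<Longrightarrow>
        {x+\<tau><..<y+\<tau>} \<subseteq> I x y \<and> I x y \<subseteq> {x+\<tau>..y+\<tau>} \<and> I x y \<in> sets lebesgue"
    and Fb: "\<And>x y z. x \<in> E \<Longrightarrow> y \<in> E \<Longrightarrow> x \<le> y \<Longrightarrow> z \<in> I x y \<Longrightarrow> \<bar>F z\<bar> \<le> 1"
    and Pd: "\<And>u. u \<in> P \<Longrightarrow> \<delta> < F (u+\<tau>)" and d: "0 < \<delta>" "\<delta> \<le> 1"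
  shows "measure lebesgue P = 0"
proof (rule ccontr)
  assume "measure lebesgue P \<noteq> 0"
  then have Ppos: "measure lebesgue P > 0" using measure_nonneg[of lebesgue P] by linarith
  define \<eta> where "\<eta> = \<delta> / 8"
  have eta: "0 < \<eta>" "\<eta> < 1" using d by (auto simp: \<eta>_def)
  have P01: "P \<subseteq> {0..1}" using PE E01 by blast
  obtain p q where pq: "p < q" "measure lebesgue (P \<inter> {p..q}) \<ge> (1-\<eta>)*(q-p)"
    using density_interval[OF Pm P01 Ppos eta] by blast
  define L where "L = q - p"
  have L0: "L > 0" using pq by (simp add: L_def)
  have pq': "(1-\<eta>)*L \<le> measure lebesgue (P \<inter> {p..q})" using pq(2) by (simp add: L_def)
  have bI: "bounded {0::real..1}" by simp
  have Pl: "P \<in> lmeasurable"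
    using Pm P01 bI by (meson bounded_subset bounded_set_imp_lmeasurable)
  have subl: "S \<subseteq> P \<Longrightarrow> S \<in> sets lebesgue \<Longrightarrow> S \<in> lmeasurable" for S
    using fmeasurableI2[OF Pl] by blast
  have PIl: "P \<inter> {a..b} \<in> lmeasurable" for a b
    by (rule subl) (use Pm in auto)
  have lm_sub: "S \<in> sets lebesgue \<Longrightarrow> S \<subseteq> {a..b} \<Longrightarrow> S \<in> lmeasurable" for S and a b :: real
  proof -
    assume "S \<in> sets lebesgue" "S \<subseteq> {a..b}"
    moreover have "bounded {a..b}" by simp
    ultimately show ?thesis using bounded_subset bounded_set_imp_lmeasurable by blast
  qed
  have compl: "measure lebesgue ({p..q} - P) \<le> \<eta> * L"
  proof -
    have e1: "{p..q} = (P \<inter> {p..q}) \<union> ({p..q} - P)" by blast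
    have X1: "P \<inter> {p..q} \<in> lmeasurable" by (rule PIl)
    have X2: "{p..q} - P \<in> lmeasurable" by (rule lm_sub) (use Pm in auto)
    have "measure lebesgue ((P \<inter> {p..q}) \<union> ({p..q} - P)) = measure lebesgue (P \<inter> {p..q}) + measure lebesgue ({p..q} - P)"
      by (rule meas_Un_disj[OF X1 X2]) blast
    then have "measure lebesgue {p..q} = measure lebesgue (P \<inter> {p..q}) + measure lebesgue ({p..q} - P)"
      using e1 by simp
    then show ?thesis using pq L0 unfolding L_def by (simp add: algebra_simps)
  qed
  define A where "A = P \<inter> {p..p+L/4}"
  define B where "B = P \<inter> {q-L/4..q}"
  have Al: "A \<in> lmeasurable" and Bl: "B \<in> lmeasurable" unfolding A_def B_def using PIl by auto
  have Am: "A \<in> sets lebesgue" and Bm: "B \<in> sets lebesgue" using Al Bl by auto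
  have AE': "A \<subseteq> E" and BE: "B \<subseteq> E" using PE unfolding A_def B_def by auto
  have Apos: "measure lebesgue A > 0"
  proof -
    have "P \<inter> {p..q} \<subseteq> A \<union> {p+L/4..q}" unfolding A_def by auto
    then have "measure lebesgue (P \<inter> {p..q}) \<le> measure lebesgue (A \<union> {p+L/4..q})"
      by (intro measure_mono_fmeasurable) (use PIl Al in auto)
    also have "\<dots> \<le> measure lebesgue A + measure lebesgue {p+L/4..q}"
      by (rule measure_Un_le) (use Am in auto)
    also have "measure lebesgue {p+L/4..q} = 3*L/4"
    proof -
      have "p + L/4 \<le> q" using L0 using L_def by linarith
      then have "measure lebesgue {p+L/4..q} = q - (p + L/4)" by simp
      then show ?thesis using L_def by linarith
    qed
    finally have "(1-\<eta>)*L \<le> measure lebesgue A + 3*L/4" using pq' by linarith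
    moreover have "\<eta> * L \<le> L / 8" using L0 d unfolding \<eta>_def by (simp add: field_simps)
    moreover have "(1-\<eta>)*L = L - \<eta> * L" by (simp add: algebra_simps)
    ultimately show ?thesis using L0 by linarith
  qed
  have Bpos: "measure lebesgue B > 0"
  proof -
    have "P \<inter> {p..q} \<subseteq> B \<union> {p..q-L/4}" unfolding B_def by auto
    then have "measure lebesgue (P \<inter> {p..q}) \<le> measure lebesgue (B \<union> {p..q-L/4})"
      by (intro measure_mono_fmeasurable) (use PIl Bl in auto)
    also have "\<dots> \<le> measure lebesgue B + measure lebesgue {p..q-L/4}"
      by (rule measure_Un_le) (use Bm in auto)
    also have "measure lebesgue {p..q-L/4} = 3*L/4"
    proof -
      have "p \<le> q - L/4" using L0 using L_def by linarith
      then have "measure lebesgue {p..q-L/4} = q - L/4 - p" by simp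
      then show ?thesis using L_def by linarith
    qed
    finally have "(1-\<eta>)*L \<le> measure lebesgue B + 3*L/4" using pq' by linarith
    moreover have "\<eta> * L \<le> L / 8" using L0 d unfolding \<eta>_def by (simp add: field_simps)
    moreover have "(1-\<eta>)*L = L - \<eta> * L" by (simp add: algebra_simps)
    ultimately show ?thesis using L0 by linarith
  qed
  define \<gamma> where "\<gamma> = \<delta> * L / 4"
  have gam0: "\<gamma> > 0" using d L0 by (simp add: \<gamma>_def)
  define D where "D = {z. \<delta> < F z}"
  have Dm: "D \<in> sets lebesgue"
  proof -
    have "{z \<in> space lebesgue. \<delta> < F z} \<in> sets lebesgue" using Fm by measurable
    then show ?thesis unfolding D_def by simp
  qed
  have gap: "G x - G y \<ge> \<gamma>" if x: "x \<in> A" and y: "y \<in> B" for x y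
  proof -
    have xy: "p \<le> x" "x \<le> p + L/4" "q - L/4 \<le> y" "y \<le> q" using x y unfolding A_def B_def by auto
    have xE: "x \<in> E" and yE: "y \<in> E" using x y AE' BE by auto
    have xly: "x \<le> y" using xy L0 using L_def by linarith
    have yx: "y - x \<ge> L/2" "y - x \<le> L" using xy using L_def by linarith+
    define J where "J = I x y"
    have J: "{x+\<tau><..<y+\<tau>} \<subseteq> J" "J \<subseteq> {x+\<tau>..y+\<tau>}" "J \<in> sets lebesgue"
      using Isand[OF xE yE xly] unfolding J_def by auto
    have Jl: "J \<in> lmeasurable" using lm_sub J by blast
    have JDl: "J \<inter> D \<in> lmeasurable" using lm_sub[of "J \<inter> D"] J Dm by blast
    have JDl': "J - D \<in> lmeasurable" using lm_sub[of "J - D"] J Dm by blast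
    have Jmeas: "measure lebesgue J \<le> y - x"
    proof -
      have "measure lebesgue J \<le> measure lebesgue {x+\<tau>..y+\<tau>}"
        by (rule measure_mono_fmeasurable) (use J in auto)
      then show ?thesis using xly by simp
    qed
    have Jsplit: "measure lebesgue J = measure lebesgue (J \<inter> D) + measure lebesgue (J - D)"
    proof -
      have "(J \<inter> D) \<union> (J - D) = J" by blast
      moreover have "measure lebesgue ((J \<inter> D) \<union> (J - D)) = measure lebesgue (J \<inter> D) + measure lebesgue (J - D)"
        by (rule meas_Un_disj[OF JDl JDl']) blast
      ultimately show ?thesis by simp
    qed
    define m where "m = measure lebesgue (P \<inter> {x<..<y})"
    have Pxyl: "P \<inter> {x<..<y} \<in> lmeasurable" by (rule lm_sub[of _ x y]) (use Pm in auto)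
    have Cl: "{p..q} - P \<in> lmeasurable" by (rule lm_sub[of _ p q]) (use Pm in auto)
    have m1: "y - x \<le> m + \<eta> * L"
    proof -
      have "{x<..<y} \<subseteq> (P \<inter> {x<..<y}) \<union> ({p..q} - P)" using xy by auto
      then have "measure lebesgue {x<..<y} \<le> measure lebesgue ((P \<inter> {x<..<y}) \<union> ({p..q} - P))"
        by (rule measure_mono_fmeasurable[OF _ _ fmeasurable.Un[OF Pxyl Cl]]) simp
      also have "\<dots> \<le> m + measure lebesgue ({p..q} - P)" unfolding m_def
        by (rule measure_Un_le[OF fmeasurableD[OF Pxyl] fmeasurableD[OF Cl]])
      finally show ?thesis using compl xly by simp
    qed
    have m2: "m \<le> measure lebesgue (J \<inter> D)"
    proof -
      have "(+) \<tau> ` (P \<inter> {x<..<y}) \<subseteq> J \<inter> D"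
        using J(1) Pd unfolding D_def by (auto simp: add.commute)
      then have "measure lebesgue ((+) \<tau> ` (P \<inter> {x<..<y})) \<le> measure lebesgue (J \<inter> D)"
        by (rule measure_mono_fmeasurable[OF _ fmeasurableD[OF measurable_translation[OF Pxyl]] JDl])
      then show ?thesis unfolding m_def measure_translation .
    qed
    have Fint: "set_integrable lebesgue S F" if S: "S \<subseteq> J" "S \<in> sets lebesgue" for S
    proof (rule sint_bdd[where C=1])
      show "F \<in> borel_measurable lebesgue" by (rule Fm)
      show "S \<in> sets lebesgue" by (rule S(2))
      have "S \<in> lmeasurable" by (rule lm_sub[of _ "x+\<tau>" "y+\<tau>"]) (use S J in auto)
      then show "emeasure lebesgue S < \<infinity>" by (rule fm_lt)
      show "\<bar>F z\<bar> \<le> 1" if "z \<in> S" for z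
        using Fb[OF xE yE xly, of z] that S(1) unfolding J_def by blast
    qed
    have JDs: "J \<inter> D \<in> sets lebesgue" and JDs': "J - D \<in> sets lebesgue"
      using fmeasurableD[OF JDl] fmeasurableD[OF JDl'] .
    have "(LINT z:J|lebesgue. F z) = (LINT z:(J \<inter> D)|lebesgue. F z) + (LINT z:(J - D)|lebesgue. F z)"
    proof -
      have e: "(J \<inter> D) \<union> (J - D) = J" by blast
      have "(LINT z:((J \<inter> D) \<union> (J - D))|lebesgue. F z) = (LINT z:(J \<inter> D)|lebesgue. F z) + (LINT z:(J - D)|lebesgue. F z)"
        by (rule set_integral_Un[OF _ Fint[OF _ JDs] Fint[OF _ JDs']]) blast+
      then show ?thesis unfolding e .
    qed
    moreover have "\<delta> * measure lebesgue (J \<inter> D) \<le> (LINT z:(J \<inter> D)|lebesgue. F z)"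
    proof (rule sint_ge[OF Fint[OF _ JDs] JDs])
      show "emeasure lebesgue (J \<inter> D) < \<infinity>" using JDl by (rule fm_lt)
      show "\<delta> \<le> F z" if "z \<in> J \<inter> D" for z using that unfolding D_def by simp
    qed blast
    moreover have "(-1) * measure lebesgue (J - D) \<le> (LINT z:(J - D)|lebesgue. F z)"
    proof (rule sint_ge[OF Fint[OF _ JDs'] JDs'])
      show "emeasure lebesgue (J - D) < \<infinity>" using JDl' by (rule fm_lt)
      show "- 1 \<le> F z" if "z \<in> J - D" for z
        using Fb[OF xE yE xly, of z] that unfolding J_def by auto
    qed blast
    ultimately have int: "(LINT z:J|lebesgue. F z) \<ge> (1+\<delta>) * m - (y - x)"
      using Jsplit Jmeas m2 d by (simp add: algebra_simps) (smt (verit) mult_left_mono)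
    have "(1+\<delta>) * m - (y - x) \<ge> \<delta> * (y - x) - (1+\<delta>) * (\<eta> * L)"
    proof -
      have "(1+\<delta>) * (y - x - \<eta> * L) \<le> (1+\<delta>) * m" using m1 d by (intro mult_left_mono) auto
      then show ?thesis by (simp add: algebra_simps)
    qed
    moreover have "\<delta> * (y - x) \<ge> \<delta> * (L/2)" using yx d by (intro mult_left_mono) auto
    moreover have "(1+\<delta>) * (\<eta> * L) \<le> 2 * (\<eta> * L)" using d eta L0 by (intro mult_right_mono) auto
    ultimately have "(LINT z:J|lebesgue. F z) \<ge> \<delta> * L / 2 - 2 * (\<eta> * L)" using int by linarith
    then show ?thesis using rel[OF xE yE xly] unfolding J_def \<gamma>_def \<eta>_def by (simp add: field_simps)
  qed
  have Ane: "A \<noteq> {}" using Apos by auto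
  have Bne: "B \<noteq> {}" using Bpos by auto
  then obtain y0 where y0: "y0 \<in> B" by blast
  obtain x0 where x0: "x0 \<in> A" using Ane by blast
  define s where "s = Sup (G ` B)"
  have bdd: "bdd_above (G ` B)"
    using gap[OF x0] gam0 by (intro bdd_aboveI[of _ "G x0"]) (force)
  have upB: "G y \<le> s" if "y \<in> B" for y
    unfolding s_def using bdd that by (simp add: cSup_upper)
  have loA: "s + \<gamma> \<le> G x" if "x \<in> A" for x
  proof -
    have "s \<le> G x - \<gamma>" unfolding s_def
      using Bne gap[OF that] by (intro cSup_least) force+
    then show ?thesis by simp
  qed
  have GintA: "set_integrable lebesgue A G"
    by (rule sint_bdd[where C=C, OF Gm Am fm_lt[OF Al]]) (use Gb AE' in blast)
  have GintB: "set_integrable lebesgue B G"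
    by (rule sint_bdd[where C=C, OF Gm Bm fm_lt[OF Bl]]) (use Gb BE in blast)
  have IA: "(s + \<gamma>) * measure lebesgue A \<le> (LINT x:A|lebesgue. G x)"
    by (rule sint_ge[OF GintA Am fm_lt[OF Al]]) (rule loA)
  have IB: "(LINT x:B|lebesgue. G x) \<le> s * measure lebesgue B"
    by (rule sint_le[OF GintB Bm fm_lt[OF Bl]]) (rule upB)
  have ex: "measure lebesgue B * (LINT x:A|lebesgue. G x) = measure lebesgue A * (LINT x:B|lebesgue. G x)"
    using exch[OF AE' BE Am Bm] .
  have "measure lebesgue B * ((s + \<gamma>) * measure lebesgue A) \<le> measure lebesgue B * (LINT x:A|lebesgue. G x)"
    using IA Bpos by (intro mult_left_mono) auto
  also have "\<dots> = measure lebesgue A * (LINT x:B|lebesgue. G x)" by (rule ex)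
  also have "\<dots> \<le> measure lebesgue A * (s * measure lebesgue B)"
    using IB Apos by (intro mult_left_mono) auto
  finally have "measure lebesgue A * measure lebesgue B * \<gamma> \<le> 0" by (simp add: algebra_simps)
  moreover have "measure lebesgue A * measure lebesgue B * \<gamma> > 0" using Apos Bpos gam0 by simp
  ultimately show False by linarith
qed


lemma diff_lemma:
  fixes E :: "real set" and G F :: "real \<Rightarrow> real" and I :: "real \<Rightarrow> real \<Rightarrow> real set"
  assumes Em: "E \<in> sets lebesgue" and E01: "E \<subseteq> {0..1}"
    and Fm: "F \<in> borel_measurable lebesgue" and Ftm: "(\<lambda>u. F (u + \<tau>)) \<in> borel_measurable lebesgue"
    and Gm: "G \<in> borel_measurable lebesgue" and Gb: "\<And>x. x \<in> E \<Longrightarrow> \<bar>G x\<bar> \<le> C"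
    and exch: "\<And>A B. A \<subseteq> E \<Longrightarrow> B \<subseteq> E \<Longrightarrow> A \<in> sets lebesgue \<Longrightarrow> B \<in> sets lebesgue \<Longrightarrow>
        measure lebesgue B * (LINT x:A|lebesgue. G x) = measure lebesgue A * (LINT x:B|lebesgue. G x)"
    and rel: "\<And>x y. x \<in> E \<Longrightarrow> y \<in> E \<Longrightarrow> x \<le> y \<Longrightarrow> G x - G y = \<sigma> * (LINT z:I x y|lebesgue. F z)"
    and sig: "\<sigma> = 1 \<or> \<sigma> = -1"
    and Isand: "\<And>x y. x \<in> E \<Longrightarrow> y \<in> E \<Longrightarrow> x \<le> y \<Longrightarrow>
        {x+\<tau><..<y+\<tau>} \<subseteq> I x y \<and> I x y \<subseteq> {x+\<tau>..y+\<tau>} \<and> I x y \<in> sets lebesgue"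
    and Fb: "\<And>x y z. x \<in> E \<Longrightarrow> y \<in> E \<Longrightarrow> x \<le> y \<Longrightarrow> z \<in> I x y \<Longrightarrow> \<bar>F z\<bar> \<le> 1"
  shows "AE u in lebesgue. u \<in> E \<longrightarrow> F (u + \<tau>) = 0"
proof -
  have El: "E \<in> lmeasurable"
  proof -
    have "bounded {0::real..1}" by simp
    then show ?thesis using Em E01 bounded_subset bounded_set_imp_lmeasurable by blast
  qed
  have key: "{u \<in> E. 1 / real (Suc n) < \<rho> * \<sigma> * F (u + \<tau>)} \<in> null_sets lebesgue"
    if rho: "\<rho> = 1 \<or> \<rho> = -1" for \<rho> :: real and n :: nat
  proof -
    define P where "P = {u \<in> E. 1 / real (Suc n) < \<rho> * \<sigma> * F (u + \<tau>)}"
    have Pm: "P \<in> sets lebesgue"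
    proof -
      have "{u \<in> space lebesgue. 1 / real (Suc n) < \<rho> * \<sigma> * F (u + \<tau>)} \<in> sets lebesgue"
        using Ftm by measurable
      then have "E \<inter> {u \<in> space lebesgue. 1 / real (Suc n) < \<rho> * \<sigma> * F (u + \<tau>)} \<in> sets lebesgue"
        using Em by blast
      moreover have "E \<inter> {u \<in> space lebesgue. 1 / real (Suc n) < \<rho> * \<sigma> * F (u + \<tau>)} = P"
        unfolding P_def by auto
      ultimately show ?thesis by simp
    qed
    have PE: "P \<subseteq> E" unfolding P_def by blast
    have rs: "\<bar>\<rho> * \<sigma>\<bar> = 1" using rho sig by auto
    have rr: "\<rho> * \<rho> = 1" using rho by auto
    have "measure lebesgue P = 0"
    proof (rule core_lemma[where P=P and E=E and G="\<lambda>x. \<rho> * G x" and F="\<lambda>z. \<rho> * \<sigma> * F z" and C="\<bar>C\<bar>" and I=I and \<tau>=\<tau> and \<delta>="1 / real (Suc n)"])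
      show "P \<in> sets lebesgue" by (rule Pm)
      show "P \<subseteq> E" by (rule PE)
      show "E \<subseteq> {0..1}" by (rule E01)
      show "(\<lambda>z. \<rho> * \<sigma> * F z) \<in> borel_measurable lebesgue" using Fm by measurable
      show "(\<lambda>x. \<rho> * G x) \<in> borel_measurable lebesgue" using Gm by measurable
      show "\<bar>\<rho> * G x\<bar> \<le> \<bar>C\<bar>" if "x \<in> E" for x
        using Gb[OF that] rho by auto
      show "measure lebesgue B * (LINT x:A|lebesgue. \<rho> * G x) = measure lebesgue A * (LINT x:B|lebesgue. \<rho> * G x)"
        if "A \<subseteq> E" "B \<subseteq> E" "A \<in> sets lebesgue" "B \<in> sets lebesgue" for A B
        using exch[OF that] by (simp add: algebra_simps)
      show "\<rho> * G x - \<rho> * G y = (LINT z:I x y|lebesgue. \<rho> * \<sigma> * F z)"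
        if "x \<in> E" "y \<in> E" "x \<le> y" for x y
      proof -
        have "\<rho> * G x - \<rho> * G y = \<rho> * (G x - G y)" by (simp add: algebra_simps)
        also have "\<dots> = (\<rho> * \<sigma>) * (LINT z:I x y|lebesgue. F z)" using rel[OF that] by simp
        also have "\<dots> = (LINT z:I x y|lebesgue. (\<rho> * \<sigma>) * F z)" by simp
        finally show ?thesis by simp
      qed
      show "{x+\<tau><..<y+\<tau>} \<subseteq> I x y \<and> I x y \<subseteq> {x+\<tau>..y+\<tau>} \<and> I x y \<in> sets lebesgue"
        if "x \<in> E" "y \<in> E" "x \<le> y" for x y using Isand[OF that] .
      show "\<bar>\<rho> * \<sigma> * F z\<bar> \<le> 1" if "x \<in> E" "y \<in> E" "x \<le> y" "z \<in> I x y" for x y z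
        using Fb[OF that] rs by (simp add: abs_mult)
      show "1 / real (Suc n) < \<rho> * \<sigma> * F (u + \<tau>)" if "u \<in> P" for u
        using that unfolding P_def by blast
      show "0 < 1 / real (Suc n)" by simp
      show "1 / real (Suc n) \<le> 1" by simp
    qed
    moreover have "P \<in> lmeasurable" using fmeasurableI2[OF El PE Pm] .
    ultimately have "emeasure lebesgue P = 0" using emeasure_eq_measure2 by (metis ennreal_0)
    then show ?thesis unfolding P_def[symmetric] using Pm by (simp add: null_sets_def)
  qed
  define N where "N = (\<Union>n. {u \<in> E. 1 / real (Suc n) < 1 * \<sigma> * F (u + \<tau>)}) \<union> (\<Union>n. {u \<in> E. 1 / real (Suc n) < (-1) * \<sigma> * F (u + \<tau>)})"
  have Nnull: "N \<in> null_sets lebesgue"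
    unfolding N_def by (intro null_sets.Un null_sets_UN key) auto
  show ?thesis
  proof (rule AE_I'[OF Nnull], rule subsetI)
    fix u assume "u \<in> {u \<in> space lebesgue. \<not> (u \<in> E \<longrightarrow> F (u + \<tau>) = 0)}"
    then have u: "u \<in> E" "F (u + \<tau>) \<noteq> 0" by auto
    then have "\<sigma> * F (u + \<tau>) \<noteq> 0" using sig by auto
    then have "0 < \<bar>\<sigma> * F (u + \<tau>)\<bar>" by simp
    then obtain n where n: "1 / real (Suc n) < \<bar>\<sigma> * F (u + \<tau>)\<bar>"
      by (metis Suc_eq_plus1 nat_approx_posE)
    then have "1 / real (Suc n) < 1 * \<sigma> * F (u + \<tau>) \<or> 1 / real (Suc n) < (-1) * \<sigma> * F (u + \<tau>)"
      by (cases "\<sigma> * F (u + \<tau>) \<ge> 0") auto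
    then show "u \<in> N" unfolding N_def using u(1) by blast
  qed
qed


lemma sf_leb: "sigma_finite_measure (lebesgue :: real measure)"
  unfolding sigma_finite_measure_def
proof (rule exI[of _ "range (\<lambda>n::nat. {-real n..real n})"], intro conjI)
  show "\<Union> (range (\<lambda>n::nat. {-real n..real n})) = space lebesgue"
    by (auto simp: abs_le_iff) (metis abs_le_iff minus_le_iff real_arch_simple)
qed auto

interpretation lebp: pair_sigma_finite "lebesgue::real measure" "lebesgue::real measure"
  unfolding pair_sigma_finite_def using sf_leb by simp

abbreviation M2 :: "(real \<times> real) measure" where "M2 \<equiv> lebesgue \<Otimes>\<^sub>M lebesgue"
abbreviation Sq :: "(real \<times> real) set" where "Sq \<equiv> {0..1} \<times> {0..1}"

lemma Sq_sets: "Sq \<in> sets M2" by simp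

lemma Sq_fin: "emeasure M2 Sq < \<infinity>"
proof -
  have "emeasure M2 Sq = emeasure lebesgue {0::real..1} * emeasure lebesgue {0::real..1}"
    by (rule sigma_finite_measure.emeasure_pair_measure_Times[OF sf_leb]) simp_all
  then show ?thesis by simp
qed

lemma fst_meas: "f \<in> borel_measurable lebesgue \<Longrightarrow> (\<lambda>z::real\<times>real. f (fst z)) \<in> borel_measurable M2"
  by (rule measurable_compose[OF measurable_fst])
lemma snd_meas: "f \<in> borel_measurable lebesgue \<Longrightarrow> (\<lambda>z::real\<times>real. f (snd z)) \<in> borel_measurable M2"
  by (rule measurable_compose[OF measurable_snd])

lemma id_leb: "(\<lambda>x::real. x) \<in> borel_measurable lebesgue"
  by (rule measurable_completion) simp

lemma fst_M2[measurable]: "(\<lambda>z::real\<times>real. fst z) \<in> borel_measurable M2"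
  using fst_meas[OF id_leb] .
lemma snd_M2[measurable]: "(\<lambda>z::real\<times>real. snd z) \<in> borel_measurable M2"
  using snd_meas[OF id_leb] .

lemma W_meas: "(\<lambda>z. halfW (fst z) (snd z)) \<in> borel_measurable M2"
  unfolding halfW_def by measurable


lemma sq_int:
  fixes f :: "real \<times> real \<Rightarrow> real"
  assumes "f \<in> borel_measurable M2" "\<And>z. z \<in> Sq \<Longrightarrow> \<bar>f z\<bar> \<le> C"
  shows "set_integrable M2 Sq f"
  by (rule sint_bdd[OF assms(1) Sq_sets Sq_fin assms(2)])

lemma ab_le: "\<bar>a\<bar> \<le> A \<Longrightarrow> \<bar>b\<bar> \<le> B \<Longrightarrow> \<bar>a * b\<bar> \<le> A * (B::real)"
  by (simp add: abs_mult mult_mono)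

lemma W_bd: "\<bar>halfW x y\<bar> \<le> 1" by (simp add: halfW_def)
lemma W_sym: "halfW x y = halfW y x" by (auto simp: halfW_def)

definition LinT :: "(real \<Rightarrow> real) \<Rightarrow> (real \<Rightarrow> real) \<Rightarrow> real" where
  "LinT \<theta> \<phi> = (LINT z:Sq|M2. halfW (fst z) (snd z) * (\<phi> (fst z) * (1 - \<theta> (snd z)) - \<theta> (fst z) * \<phi> (snd z)))"
definition QdT :: "(real \<Rightarrow> real) \<Rightarrow> real" where
  "QdT \<phi> = (LINT z:Sq|M2. halfW (fst z) (snd z) * \<phi> (fst z) * \<phi> (snd z))"

lemma cut_expand:
  fixes \<theta> \<phi> :: "real \<Rightarrow> real"
  assumes tm: "\<theta> \<in> borel_measurable lebesgue" and pm: "\<phi> \<in> borel_measurable lebesgue"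
    and tb: "\<And>x. x \<in> {0..1} \<Longrightarrow> \<bar>\<theta> x\<bar> \<le> 1" and pb: "\<And>x. x \<in> {0..1} \<Longrightarrow> \<bar>\<phi> x\<bar> \<le> B"
  shows "cutJ halfW (\<lambda>x. \<theta> x + s * \<phi> x) = cutJ halfW \<theta> + 8 * s * LinT \<theta> \<phi> - 8 * s^2 * QdT \<phi>"
proof -
  define f0 where "f0 z = halfW (fst z) (snd z) * \<theta> (fst z) * (1 - \<theta> (snd z))" for z :: "real \<times> real"
  define f1 where "f1 z = halfW (fst z) (snd z) * (\<phi> (fst z) * (1 - \<theta> (snd z)) - \<theta> (fst z) * \<phi> (snd z))" for z :: "real \<times> real"
  define f2 where "f2 z = halfW (fst z) (snd z) * \<phi> (fst z) * \<phi> (snd z)" for z :: "real \<times> real"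
  have eq: "halfW (fst z) (snd z) * (\<theta> (fst z) + s * \<phi> (fst z)) * (1 - (\<theta> (snd z) + s * \<phi> (snd z)))
      = f0 z + s * f1 z - s^2 * f2 z" for z
    by (simp add: f0_def f1_def f2_def algebra_simps power2_eq_square)
  note [measurable] = W_meas fst_meas[OF tm] snd_meas[OF tm] fst_meas[OF pm] snd_meas[OF pm]
  have B0: "0 \<le> B" using pb[of 0] by simp
  have bnd: "\<bar>\<theta> (fst z)\<bar> \<le> 1" "\<bar>\<theta> (snd z)\<bar> \<le> 1" "\<bar>\<phi> (fst z)\<bar> \<le> B" "\<bar>\<phi> (snd z)\<bar> \<le> B"
    "\<bar>1 - \<theta> (snd z)\<bar> \<le> 2" if "z \<in> Sq" for z
    using that tb[of "fst z"] tb[of "snd z"] pb[of "fst z"] pb[of "snd z"] by (auto simp: mem_Times_iff)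
  have i0: "set_integrable M2 Sq f0"
  proof (rule sq_int[where C="1*1*2"])
    show "f0 \<in> borel_measurable M2" unfolding f0_def by measurable
    show "\<bar>f0 z\<bar> \<le> 1*1*2" if "z \<in> Sq" for z
      unfolding f0_def by (intro ab_le W_bd bnd[OF that])
  qed
  have i1: "set_integrable M2 Sq f1"
  proof (rule sq_int[where C="1*(B*2 + 1*B)"])
    show "f1 \<in> borel_measurable M2" unfolding f1_def by measurable
    show "\<bar>f1 z\<bar> \<le> 1*(B*2 + 1*B)" if "z \<in> Sq" for z
      unfolding f1_def
      by (intro ab_le W_bd order_trans[OF abs_triangle_ineq4] add_mono bnd[OF that])
  qed
  have i2: "set_integrable M2 Sq f2"
  proof (rule sq_int[where C="1*B*B"])
    show "f2 \<in> borel_measurable M2" unfolding f2_def by measurable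
    show "\<bar>f2 z\<bar> \<le> 1*B*B" if "z \<in> Sq" for z
      unfolding f2_def by (intro ab_le W_bd bnd[OF that])
  qed
  have "cutJ halfW (\<lambda>x. \<theta> x + s * \<phi> x) = 8 * (LINT z:Sq|M2. f0 z + s * f1 z - s^2 * f2 z)"
    unfolding cutJ_def eq ..
  also have "(LINT z:Sq|M2. f0 z + s * f1 z - s^2 * f2 z) = (LINT z:Sq|M2. f0 z) + s * (LINT z:Sq|M2. f1 z) - s^2 * (LINT z:Sq|M2. f2 z)"
    using i0 i1 i2 by (simp add: set_integral_add set_integral_diff)
  finally show ?thesis
    unfolding cutJ_def LinT_def QdT_def f0_def f1_def f2_def by (simp add: algebra_simps)
qed


definition Gf :: "(real \<Rightarrow> real) \<Rightarrow> real \<Rightarrow> real" where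
  "Gf \<theta> x = (LINT y:{0..1}|lebesgue. halfW x y * (1 - 2 * \<theta> y))"

lemma LinT_fubini:
  fixes \<theta> \<phi> :: "real \<Rightarrow> real"
  assumes tm: "\<theta> \<in> borel_measurable lebesgue" and pm: "\<phi> \<in> borel_measurable lebesgue"
    and tb: "\<And>x. x \<in> {0..1} \<Longrightarrow> \<bar>\<theta> x\<bar> \<le> 1" and pb: "\<And>x. x \<in> {0..1} \<Longrightarrow> \<bar>\<phi> x\<bar> \<le> B"
  shows "LinT \<theta> \<phi> = (LINT x:{0..1}|lebesgue. \<phi> x * Gf \<theta> x)"
proof -
  note [measurable] = W_meas fst_meas[OF tm] snd_meas[OF tm] fst_meas[OF pm] snd_meas[OF pm]
  have B0: "0 \<le> B" using pb[of 0] by simp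
  have bnd: "\<bar>\<theta> (fst z)\<bar> \<le> 1" "\<bar>\<theta> (snd z)\<bar> \<le> 1" "\<bar>\<phi> (fst z)\<bar> \<le> B" "\<bar>\<phi> (snd z)\<bar> \<le> B"
    "\<bar>1 - \<theta> (snd z)\<bar> \<le> 2" "\<bar>1 - 2 * \<theta> (snd z)\<bar> \<le> 3" if "z \<in> Sq" for z
    using that tb[of "fst z"] tb[of "snd z"] pb[of "fst z"] pb[of "snd z"] by (auto simp: mem_Times_iff)
  define a where "a z = halfW (fst z) (snd z) * (\<phi> (fst z) * (1 - \<theta> (snd z)))" for z :: "real \<times> real"
  define b where "b z = halfW (fst z) (snd z) * (\<theta> (fst z) * \<phi> (snd z))" for z :: "real \<times> real"
  define b' where "b' z = halfW (fst z) (snd z) * (\<theta> (snd z) * \<phi> (fst z))" for z :: "real \<times> real"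
  define c where "c z = halfW (fst z) (snd z) * (\<phi> (fst z) * (1 - 2 * \<theta> (snd z)))" for z :: "real \<times> real"
  have ia: "set_integrable M2 Sq a"
    by (rule sq_int[where C="1*(B*2)"]) (unfold a_def, measurable, intro ab_le W_bd bnd, auto)
  have ib: "set_integrable M2 Sq b"
    by (rule sq_int[where C="1*(1*B)"]) (unfold b_def, measurable, intro ab_le W_bd bnd, auto)
  have ib': "set_integrable M2 Sq b'"
    by (rule sq_int[where C="1*(1*B)"]) (unfold b'_def, measurable, intro ab_le W_bd bnd, auto)
  have ic: "set_integrable M2 Sq c"
    by (rule sq_int[where C="1*(B*3)"]) (unfold c_def, measurable, intro ab_le W_bd bnd, auto)
  have swap: "(LINT z:Sq|M2. b z) = (LINT z:Sq|M2. b' z)"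
  proof -
    define g where "g z = indicator Sq z * b z" for z :: "real \<times> real"
    have bm: "b \<in> borel_measurable M2" unfolding b_def by measurable
    have gm: "g \<in> borel_measurable M2" unfolding g_def
      by (rule borel_measurable_times[OF borel_measurable_indicator[OF Sq_sets] bm])
    have "(\<integral>(x,y). g (y,x) \<partial>M2) = integral\<^sup>L M2 g"
      by (rule lebp.integral_product_swap[OF gm])
    moreover have "(\<lambda>(x,y). g (y,x)) = (\<lambda>z. indicator Sq z * b' z)"
      by (auto simp: g_def b_def b'_def W_sym indicator_def mem_Times_iff fun_eq_iff)
    ultimately show ?thesis unfolding set_lebesgue_integral_def g_def by simp
  qed
  have "LinT \<theta> \<phi> = (LINT z:Sq|M2. a z - b z)"
    unfolding LinT_def a_def b_def by (simp add: algebra_simps)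
  also have "\<dots> = (LINT z:Sq|M2. a z) - (LINT z:Sq|M2. b' z)"
    using ia ib swap by (simp add: set_integral_diff)
  also have "\<dots> = (LINT z:Sq|M2. a z - b' z)"
    using ia ib' by (simp add: set_integral_diff)
  also have "\<dots> = (LINT z:Sq|M2. c z)"
    unfolding a_def b'_def c_def by (simp add: algebra_simps)
  also have "\<dots> = (LINT x:{0..1}|lebesgue. \<phi> x * Gf \<theta> x)"
  proof -
    have int: "integrable M2 (\<lambda>z. indicator Sq z * c z)"
      using ic unfolding set_integrable_def by simp
    have "(LINT z:Sq|M2. c z) = integral\<^sup>L M2 (\<lambda>z. indicator Sq z * c z)"
      unfolding set_lebesgue_integral_def by simp
    also have "\<dots> = (\<integral>x. (\<integral>y. indicator Sq (x,y) * c (x,y) \<partial>lebesgue) \<partial>lebesgue)"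
      by (rule lebp.integral_fst'[OF int, symmetric])
    also have "\<dots> = (\<integral>x. indicator {0..1} x * (\<phi> x * Gf \<theta> x) \<partial>lebesgue)"
    proof (rule Bochner_Integration.integral_cong[OF refl])
      fix x :: real
      have "(\<lambda>y. indicator Sq (x,y) * c (x,y)) = (\<lambda>y. (indicator {0..1} x * \<phi> x) * (indicator {0..1} y * (halfW x y * (1 - 2 * \<theta> y))))"
        by (auto simp: c_def indicator_def mem_Times_iff fun_eq_iff)
      then have "(\<integral>y. indicator Sq (x,y) * c (x,y) \<partial>lebesgue) = (indicator {0..1} x * \<phi> x) * (\<integral>y. indicator {0..1} y * (halfW x y * (1 - 2 * \<theta> y)) \<partial>lebesgue)"
        by simp
      also have "\<dots> = indicator {0..1} x * (\<phi> x * Gf \<theta> x)"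
        unfolding Gf_def set_lebesgue_integral_def by simp
      finally show "(\<integral>y. indicator Sq (x,y) * c (x,y) \<partial>lebesgue) = indicator {0..1} x * (\<phi> x * Gf \<theta> x)" .
    qed
    also have "\<dots> = (LINT x:{0..1}|lebesgue. \<phi> x * Gf \<theta> x)"
      unfolding set_lebesgue_integral_def by simp
    finally show ?thesis .
  qed
  finally show ?thesis .
qed


declare id_leb[measurable]

lemma H_facts:
  assumes "\<theta> \<in> bisectH"
  shows "\<theta> \<in> borel_measurable lebesgue" "\<And>x. x \<in> {0..1} \<Longrightarrow> 0 \<le> \<theta> x \<and> \<theta> x \<le> 1"
    "(LINT x:{0..1}|lebesgue. \<theta> x) = 1/2"
  using assms unfolding bisectH_def by auto

lemma I01_fin: "emeasure lebesgue {0::real..1} < \<infinity>" by simp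

lemma perturb_H:
  fixes \<theta> \<phi> :: "real \<Rightarrow> real"
  assumes tH: "\<theta> \<in> bisectH" and pm: "\<phi> \<in> borel_measurable lebesgue"
    and pb: "\<And>x. x \<in> {0..1} \<Longrightarrow> \<bar>\<phi> x\<bar> \<le> B"
    and rng: "\<And>x. x \<in> {0..1} \<Longrightarrow> 0 \<le> \<theta> x + s * \<phi> x \<and> \<theta> x + s * \<phi> x \<le> 1"
    and p0: "(LINT x:{0..1}|lebesgue. \<phi> x) = 0"
  shows "(\<lambda>x. \<theta> x + s * \<phi> x) \<in> bisectH"
proof -
  note tf = H_facts[OF tH]
  have it: "set_integrable lebesgue {0..1} \<theta>"
    by (rule sint_bdd[where C=1, OF tf(1) _ I01_fin]) (use tf(2) in auto)
  have ip: "set_integrable lebesgue {0..1} (\<lambda>x. s * \<phi> x)"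
    by (rule sint_bdd[where C="\<bar>s\<bar> * B", OF _ _ I01_fin]) (use pm pb in \<open>auto simp: abs_mult intro: mult_left_mono\<close>)
  have "(LINT x:{0..1}|lebesgue. \<theta> x + s * \<phi> x) = (LINT x:{0..1}|lebesgue. \<theta> x) + (LINT x:{0..1}|lebesgue. s * \<phi> x)"
    by (rule set_integral_add[OF it ip])
  also have "\<dots> = 1/2" using tf(3) p0 by simp
  finally have "(LINT x:{0..1}|lebesgue. \<theta> x + s * \<phi> x) = 1/2" .
  moreover have "(\<lambda>x. \<theta> x + s * \<phi> x) \<in> borel_measurable lebesgue" using tf(1) pm by measurable
  ultimately show ?thesis using rng unfolding bisectH_def by auto
qed

lemma Gf_meas:
  assumes tm: "\<theta> \<in> borel_measurable lebesgue"
  shows "Gf \<theta> \<in> borel_measurable lebesgue"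
proof -
  note [measurable] = W_meas snd_meas[OF tm] snd_meas[OF borel_measurable_indicator[of "{0::real..1}" lebesgue]]
  have "(\<lambda>x. \<integral>y. indicator {0..1} y * (halfW x y * (1 - 2 * \<theta> y)) \<partial>lebesgue) \<in> borel_measurable lebesgue"
    by (rule sigma_finite_measure.borel_measurable_lebesgue_integral[OF sf_leb]) measurable
  then show ?thesis unfolding Gf_def set_lebesgue_integral_def by simp
qed

lemma Gf_bnd:
  assumes tm: "\<theta> \<in> borel_measurable lebesgue" and tb: "\<And>x. x \<in> {0..1} \<Longrightarrow> \<bar>\<theta> x\<bar> \<le> 1"
  shows "\<bar>Gf \<theta> x\<bar> \<le> 3"
proof -
  have hm: "(\<lambda>y. halfW x y * (1 - 2 * \<theta> y)) \<in> borel_measurable lebesgue"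
    using tm unfolding halfW_def by measurable
  have hb: "\<bar>halfW x y * (1 - 2 * \<theta> y)\<bar> \<le> 3" if "y \<in> {0..1}" for y
  proof -
    have "\<bar>1 - 2 * \<theta> y\<bar> \<le> 3" using tb[OF that] by auto
    then show ?thesis using ab_le[OF W_bd[of x y]] by fastforce
  qed
  have i: "set_integrable lebesgue {0..1} (\<lambda>y. halfW x y * (1 - 2 * \<theta> y))"
    by (rule sint_bdd[where C=3, OF hm _ I01_fin hb]) simp
  have "(-3) * measure lebesgue {0::real..1} \<le> Gf \<theta> x" unfolding Gf_def
  proof (rule sint_ge[OF i _ I01_fin])
    show "- 3 \<le> halfW x y * (1 - 2 * \<theta> y)" if "y \<in> {0..1}" for y
      using hb[OF that] by linarith
  qed simp
  moreover have "Gf \<theta> x \<le> 3 * measure lebesgue {0::real..1}" unfolding Gf_def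
  proof (rule sint_le[OF i _ I01_fin])
    show "halfW x y * (1 - 2 * \<theta> y) \<le> 3" if "y \<in> {0..1}" for y
      using hb[OF that] by linarith
  qed simp
  ultimately show ?thesis by simp
qed


lemma lm01: "(S::real set) \<in> sets lebesgue \<Longrightarrow> S \<subseteq> {0..1} \<Longrightarrow> S \<in> lmeasurable"
proof -
  assume "S \<in> sets lebesgue" "S \<subseteq> {0..1}"
  moreover have "bounded {0::real..1}" by simp
  ultimately show ?thesis using bounded_subset bounded_set_imp_lmeasurable by blast
qed

lemma meas01: "(S::real set) \<in> sets lebesgue \<Longrightarrow> S \<subseteq> {0..1} \<Longrightarrow> measure lebesgue S \<le> 1"
proof -
  assume a: "S \<in> sets lebesgue" "S \<subseteq> {0..1}"
  have "measure lebesgue S \<le> measure lebesgue {0::real..1}"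
    by (rule measure_mono_fmeasurable[OF a(2) a(1)]) simp
  then show ?thesis by simp
qed

lemma sint_indicator:
  assumes "A \<in> sets lebesgue" "A \<subseteq> {0..1}"
  shows "(LINT x:{0..1}|lebesgue. indicator A x) = measure lebesgue (A::real set)"
proof -
  have "(\<lambda>x. indicator {0..1} x *\<^sub>R indicator A x) = (indicator A :: real \<Rightarrow> real)"
    using assms(2) by (auto simp: indicator_def fun_eq_iff)
  then show ?thesis unfolding set_lebesgue_integral_def
    using Bochner_Integration.integral_indicator[of lebesgue A] by simp
qed

lemma exch_lemma:
  fixes \<theta> :: "real \<Rightarrow> real"
  assumes tH: "\<theta> \<in> bisectH" and minH: "\<forall>\<psi>\<in>bisectH. cutJ halfW \<theta> \<le> cutJ halfW \<psi>"
    and E01: "E \<subseteq> {0..1}" and Eclose: "\<And>x y. x \<in> E \<Longrightarrow> y \<in> E \<Longrightarrow> \<bar>x - y\<bar> < 1/2"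
    and Eeps: "\<And>x. x \<in> E \<Longrightarrow> \<epsilon> \<le> \<theta> x \<and> \<theta> x \<le> 1 - \<epsilon>" and eps: "0 < \<epsilon>"
    and AB: "A \<subseteq> E" "B \<subseteq> E" "A \<in> sets lebesgue" "B \<in> sets lebesgue"
  shows "measure lebesgue B * (LINT x:A|lebesgue. Gf \<theta> x) = measure lebesgue A * (LINT x:B|lebesgue. Gf \<theta> x)"
proof -
  note tf = H_facts[OF tH]
  have tb: "\<And>x. x \<in> {0..1} \<Longrightarrow> \<bar>\<theta> x\<bar> \<le> 1" using tf(2) by fastforce
  have A01: "A \<subseteq> {0..1}" and B01: "B \<subseteq> {0..1}" using AB E01 by auto
  define a where "a = measure lebesgue A"
  define b where "b = measure lebesgue B"
  have a01: "0 \<le> a" "a \<le> 1" unfolding a_def using meas01[OF AB(3) A01] by auto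
  have b01: "0 \<le> b" "b \<le> 1" unfolding b_def using meas01[OF AB(4) B01] by auto
  define \<phi> where "\<phi> x = b * indicator A x - a * indicator B x" for x :: real
  have pm: "\<phi> \<in> borel_measurable lebesgue" unfolding \<phi>_def using AB(3,4) by measurable
  have pb: "\<bar>\<phi> x\<bar> \<le> 2" for x
    using a01 b01 unfolding \<phi>_def by (auto simp: indicator_def)
  have p0out: "\<phi> x = 0" if "x \<notin> E" for x using that AB(1,2) unfolding \<phi>_def by (auto simp: indicator_def)
  have Q0: "QdT \<phi> = 0"
  proof -
    have z0: "halfW (fst z) (snd z) * \<phi> (fst z) * \<phi> (snd z) = 0" for z :: "real \<times> real"
    proof (cases "fst z \<in> E \<and> snd z \<in> E")
      case True
      then have "\<bar>fst z - snd z\<bar> < 1/2" using Eclose by blast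
      then have "halfW (fst z) (snd z) = 0" unfolding halfW_def by auto
      then show ?thesis by simp
    next
      case False
      then show ?thesis using p0out by auto
    qed
    show ?thesis unfolding QdT_def z0 by simp
  qed
  have iA: "set_integrable lebesgue {0..1} (indicator A :: real \<Rightarrow> real)"
    by (rule sint_bdd[where C=1, OF _ _ I01_fin]) (use AB in \<open>auto simp: indicator_def\<close>)
  have iB: "set_integrable lebesgue {0..1} (indicator B :: real \<Rightarrow> real)"
    by (rule sint_bdd[where C=1, OF _ _ I01_fin]) (use AB in \<open>auto simp: indicator_def\<close>)
  have int0: "(LINT x:{0..1}|lebesgue. \<phi> x) = 0"
  proof -
    have "(LINT x:{0..1}|lebesgue. \<phi> x) = (LINT x:{0..1}|lebesgue. b * indicator A x) - (LINT x:{0..1}|lebesgue. a * indicator B x)"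
      unfolding \<phi>_def by (rule set_integral_diff) (use iA iB in auto)
    also have "\<dots> = b * a - a * b"
      using sint_indicator[OF AB(3) A01] sint_indicator[OF AB(4) B01] unfolding a_def b_def by simp
    finally show ?thesis by simp
  qed
  define s where "s = \<epsilon> / 2"
  have s0: "s > 0" using eps by (simp add: s_def)
  have rng: "0 \<le> \<theta> x + t * \<phi> x \<and> \<theta> x + t * \<phi> x \<le> 1" if "x \<in> {0..1}" "t = s \<or> t = -s" for x t
  proof (cases "x \<in> E")
    case True
    have "\<bar>t * \<phi> x\<bar> \<le> s * 2" using that(2) pb[of x] s0 by (auto simp: abs_mult intro: mult_left_mono)
    then show ?thesis using Eeps[OF True] unfolding s_def by (auto simp: abs_le_iff)
  next
    case False
    then show ?thesis using p0out tf(2)[OF that(1)] by simp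
  qed
  have Jp: "cutJ halfW \<theta> \<le> cutJ halfW (\<lambda>x. \<theta> x + s * \<phi> x)"
    using minH perturb_H[OF tH pm _ rng int0] pb by blast
  have Jm: "cutJ halfW \<theta> \<le> cutJ halfW (\<lambda>x. \<theta> x + (-s) * \<phi> x)"
    using minH perturb_H[OF tH pm _ rng int0] pb by blast
  have ep: "cutJ halfW (\<lambda>x. \<theta> x + s * \<phi> x) = cutJ halfW \<theta> + 8 * s * LinT \<theta> \<phi>"
    using cut_expand[OF tf(1) pm tb pb, of s] Q0 by simp
  have em: "cutJ halfW (\<lambda>x. \<theta> x + (-s) * \<phi> x) = cutJ halfW \<theta> - 8 * s * LinT \<theta> \<phi>"
    using cut_expand[OF tf(1) pm tb pb, of "-s"] Q0 by simp
  have L0: "LinT \<theta> \<phi> = 0"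
  proof -
    have "0 \<le> s * LinT \<theta> \<phi>" "s * LinT \<theta> \<phi> \<le> 0" using Jp Jm ep em by linarith+
    then have "s * LinT \<theta> \<phi> = 0" by linarith
    then show ?thesis using s0 by simp
  qed
  have Gm: "Gf \<theta> \<in> borel_measurable lebesgue" by (rule Gf_meas[OF tf(1)])
  have Gb: "\<bar>Gf \<theta> x\<bar> \<le> 3" for x by (rule Gf_bnd[OF tf(1) tb])
  have iGA: "integrable lebesgue (\<lambda>x. indicator A x * Gf \<theta> x)"
    using sint_bdd[where C=3, OF Gm AB(3) fm_lt[OF lm01[OF AB(3) A01]]] Gb unfolding set_integrable_def by simp
  have iGB: "integrable lebesgue (\<lambda>x. indicator B x * Gf \<theta> x)"
    using sint_bdd[where C=3, OF Gm AB(4) fm_lt[OF lm01[OF AB(4) B01]]] Gb unfolding set_integrable_def by simp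
  have "LinT \<theta> \<phi> = (LINT x:{0..1}|lebesgue. \<phi> x * Gf \<theta> x)"
    by (rule LinT_fubini[OF tf(1) pm tb pb])
  also have "\<dots> = (\<integral>x. b * (indicator A x * Gf \<theta> x) - a * (indicator B x * Gf \<theta> x) \<partial>lebesgue)"
    unfolding set_lebesgue_integral_def
  proof (rule Bochner_Integration.integral_cong[OF refl])
    fix x :: real
    show "indicator {0..1} x *\<^sub>R (\<phi> x * Gf \<theta> x) = b * (indicator A x * Gf \<theta> x) - a * (indicator B x * Gf \<theta> x)"
      using A01 B01 unfolding \<phi>_def by (auto simp: indicator_def algebra_simps)
  qed
  also have "\<dots> = b * (\<integral>x. indicator A x * Gf \<theta> x \<partial>lebesgue) - a * (\<integral>x. indicator B x * Gf \<theta> x \<partial>lebesgue)"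
    using iGA iGB by simp
  also have "\<dots> = b * (LINT x:A|lebesgue. Gf \<theta> x) - a * (LINT x:B|lebesgue. Gf \<theta> x)"
    unfolding set_lebesgue_integral_def by simp
  finally show ?thesis using L0 unfolding a_def b_def by simp
qed


lemma quartiles:
  fixes R :: "real set"
  assumes Rm: "R \<in> sets lebesgue" and R0: "R \<subseteq> {0<..<1/2}" and Rpos: "measure lebesgue R > 0"
  obtains t1 t2 t3 where "t1 < t2" "t2 < t3"
    "measure lebesgue (R \<inter> {..t1}) = measure lebesgue R / 4"
    "measure lebesgue (R \<inter> {t1<..t2}) = measure lebesgue R / 4"
    "measure lebesgue (R \<inter> {t2<..t3}) = measure lebesgue R / 4"
    "measure lebesgue (R \<inter> {t3<..}) = measure lebesgue R / 4"
proof -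
  define \<mu> where "\<mu> = measure lebesgue R"
  define f where "f t = measure lebesgue (R \<inter> {..t})" for t
  have R01: "R \<subseteq> {0..1}" using R0 by auto
  have Rl: "R \<in> lmeasurable" by (rule lm01[OF Rm R01])
  have subl: "R \<inter> S \<in> lmeasurable" if "S \<in> sets lebesgue" for S
    by (rule fmeasurableI2[OF Rl]) (use Rm that in auto)
  have split: "f t = f s + measure lebesgue (R \<inter> {s<..t})" if "s \<le> t" for s t
  proof -
    have e: "(R \<inter> {..s}) \<union> (R \<inter> {s<..t}) = R \<inter> {..t}" using that by auto
    have "measure lebesgue ((R \<inter> {..s}) \<union> (R \<inter> {s<..t})) = f s + measure lebesgue (R \<inter> {s<..t})"
      unfolding f_def by (rule meas_Un_disj[OF subl subl]) auto
    then show ?thesis unfolding e f_def .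
  qed
  have bnd: "measure lebesgue (R \<inter> {s<..t}) \<le> t - s" if "s \<le> t" for s t
  proof -
    have bd: "bounded {s<..t}" by (rule bounded_subset[of "{s..t}"]) auto
    have "measure lebesgue (R \<inter> {s<..t}) \<le> measure lebesgue {s<..t}"
      by (rule measure_mono_fmeasurable) (auto intro: fmeasurableD[OF subl] bounded_set_imp_lmeasurable[OF bd])
    then show ?thesis using that by simp
  qed
  have mono: "f s \<le> f t" if "s \<le> t" for s t using split[OF that] by simp
  have lip: "\<bar>f s - f t\<bar> \<le> \<bar>s - t\<bar>" for s t
  proof (cases "s \<le> t")
    case True then show ?thesis using split[OF True] bnd[OF True] by simp
  next
    case False then have "t \<le> s" by simp
    then show ?thesis using split[OF \<open>t \<le> s\<close>] bnd[OF \<open>t \<le> s\<close>] by simp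
  qed
  have cont: "continuous_on {0..1/2} f"
  proof (rule lipschitz_on_continuous_on[of 1])
    show "1-lipschitz_on {0..1/2} f"
      by (rule lipschitz_onI) (use lip in \<open>auto simp: dist_real_def\<close>)
  qed
  have f0: "f 0 = 0"
  proof -
    have "R \<inter> {..0} = {}" using R0 by auto
    then show ?thesis unfolding f_def by simp
  qed
  have f1: "f (1/2) = \<mu>"
  proof -
    have "R \<inter> {..1/2} = R" using R0 by auto
    then show ?thesis unfolding f_def \<mu>_def by simp
  qed
  have mu0: "\<mu> > 0" using Rpos by (simp add: \<mu>_def)
  have ivt: "\<exists>t. 0 \<le> t \<and> t \<le> 1/2 \<and> f t = c" if "0 \<le> c" "c \<le> \<mu>" for c
    by (rule IVT'[OF _ _ _ cont]) (use f0 f1 that in auto)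
  obtain t1 where t1: "f t1 = \<mu>/4" using ivt[of "\<mu>/4"] mu0 by auto
  obtain t2 where t2: "f t2 = \<mu>/2" using ivt[of "\<mu>/2"] mu0 by auto
  obtain t3 where t3: "f t3 = 3*\<mu>/4" using ivt[of "3*\<mu>/4"] mu0 by auto
  have t12: "t1 < t2"
  proof (rule ccontr)
    assume "\<not> t1 < t2" then have "f t2 \<le> f t1" using mono by simp
    then show False using t1 t2 mu0 by simp
  qed
  have t23: "t2 < t3"
  proof (rule ccontr)
    assume "\<not> t2 < t3" then have "f t3 \<le> f t2" using mono by simp
    then show False using t3 t2 mu0 by simp
  qed
  have m2: "measure lebesgue (R \<inter> {t1<..t2}) = \<mu>/4" using split[of t1 t2] t12 t1 t2 by simp
  have m3: "measure lebesgue (R \<inter> {t2<..t3}) = \<mu>/4" using split[of t2 t3] t23 t2 t3 by simp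
  have m4: "measure lebesgue (R \<inter> {t3<..}) = \<mu>/4"
  proof -
    have e: "(R \<inter> {..t3}) \<union> (R \<inter> {t3<..}) = R" by auto
    have "measure lebesgue ((R \<inter> {..t3}) \<union> (R \<inter> {t3<..})) = f t3 + measure lebesgue (R \<inter> {t3<..})"
      unfolding f_def by (rule meas_Un_disj[OF subl subl]) auto
    then show ?thesis unfolding e using t3 by (simp add: \<mu>_def)
  qed
  show ?thesis
    by (rule that[OF t12 t23]) (use t1 m2 m3 m4 in \<open>simp_all add: f_def \<mu>_def\<close>)
qed


lemma rect_meas:
  fixes A B :: "real set"
  assumes "A \<in> lmeasurable" "B \<in> lmeasurable"
  shows "A \<times> B \<in> sets M2" "emeasure M2 (A \<times> B) < \<infinity>" "measure M2 (A \<times> B) = measure lebesgue A * measure lebesgue B"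
proof -
  show s: "A \<times> B \<in> sets M2" using assms by (auto intro: fmeasurableD)
  have e: "emeasure M2 (A \<times> B) = emeasure lebesgue A * emeasure lebesgue B"
    by (rule sigma_finite_measure.emeasure_pair_measure_Times[OF sf_leb]) (use assms in \<open>auto intro: fmeasurableD\<close>)
  then show "emeasure M2 (A \<times> B) < \<infinity>"
    using fm_lt[OF assms(1)] fm_lt[OF assms(2)] by (simp add: ennreal_mult_less_top)
  show "measure M2 (A \<times> B) = measure lebesgue A * measure lebesgue B"
    unfolding measure_def e by (simp add: enn2real_mult)
qed

lemma rect_int:
  fixes A B :: "real set"
  assumes "A \<in> lmeasurable" "B \<in> lmeasurable"
  shows "integrable M2 (indicator (A \<times> B) :: real \<times> real \<Rightarrow> real)"
    "integral\<^sup>L M2 (indicator (A \<times> B) :: real \<times> real \<Rightarrow> real) = measure lebesgue A * measure lebesgue B"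
  using rect_meas[OF assms] by (auto intro: integrable_real_indicator)

lemma final_contra:
  fixes \<theta> :: "real \<Rightarrow> real" and R :: "real set"
  assumes tH: "\<theta> \<in> bisectH" and minH: "\<forall>\<psi>\<in>bisectH. cutJ halfW \<theta> \<le> cutJ halfW \<psi>"
    and Rm: "R \<in> sets lebesgue" and R0: "R \<subseteq> {0<..<1/2}" and Rpos: "measure lebesgue R > 0"
    and eps: "0 < \<epsilon>"
    and Rl: "\<And>u. u \<in> R \<Longrightarrow> \<epsilon> \<le> \<theta> u \<and> \<theta> u \<le> 1 - \<epsilon>"
    and Rr: "\<And>u. u \<in> R \<Longrightarrow> \<epsilon> \<le> \<theta> (u + 1/2) \<and> \<theta> (u + 1/2) \<le> 1 - \<epsilon>"
  shows False
proof -
  note tf = H_facts[OF tH]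
  have tb: "\<And>x. x \<in> {0..1} \<Longrightarrow> \<bar>\<theta> x\<bar> \<le> 1" using tf(2) by fastforce
  obtain t1 t2 t3 where t: "t1 < t2" "t2 < t3"
    "measure lebesgue (R \<inter> {..t1}) = measure lebesgue R / 4"
    "measure lebesgue (R \<inter> {t1<..t2}) = measure lebesgue R / 4"
    "measure lebesgue (R \<inter> {t2<..t3}) = measure lebesgue R / 4"
    "measure lebesgue (R \<inter> {t3<..}) = measure lebesgue R / 4"
    using quartiles[OF Rm R0 Rpos] by blast
  define m where "m = measure lebesgue R / 4"
  have m0: "m > 0" using Rpos by (simp add: m_def)
  define L1 where "L1 = R \<inter> {..t1}"
  define L2 where "L2 = R \<inter> {t1<..t2}"
  define L3 where "L3 = R \<inter> {t2<..t3}"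
  define L4 where "L4 = R \<inter> {t3<..}"
  define S2 where "S2 = {x. x - 1/2 \<in> L2}"
  define S4 where "S4 = {x. x - 1/2 \<in> L4}"
  have R01: "R \<subseteq> {0..1}" using R0 by auto
  have Rlm: "R \<in> lmeasurable" by (rule lm01[OF Rm R01])
  have subl: "R \<inter> S \<in> lmeasurable" if "S \<in> sets lebesgue" for S
    by (rule fmeasurableI2[OF Rlm]) (use Rm that in auto)
  have L1l: "L1 \<in> lmeasurable" and L2l: "L2 \<in> lmeasurable" and L3l: "L3 \<in> lmeasurable" and L4l: "L4 \<in> lmeasurable"
    unfolding L1_def L2_def L3_def L4_def by (rule subl; simp)+
  have S2eq: "S2 = (+) (1/2) ` L2"
  proof
    show "S2 \<subseteq> (+) (1/2) ` L2"
    proof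
      fix x assume "x \<in> S2"
      then have "x - 1/2 \<in> L2" unfolding S2_def by simp
      then show "x \<in> (+) (1/2) ` L2" by (rule rev_image_eqI) simp
    qed
    show "(+) (1/2) ` L2 \<subseteq> S2" unfolding S2_def by auto
  qed
  have S4eq: "S4 = (+) (1/2) ` L4"
  proof
    show "S4 \<subseteq> (+) (1/2) ` L4"
    proof
      fix x assume "x \<in> S4"
      then have "x - 1/2 \<in> L4" unfolding S4_def by simp
      then show "x \<in> (+) (1/2) ` L4" by (rule rev_image_eqI) simp
    qed
    show "(+) (1/2) ` L4 \<subseteq> S4" unfolding S4_def by auto
  qed
  have S2l: "S2 \<in> lmeasurable" unfolding S2eq by (rule measurable_translation[OF L2l])
  have S4l: "S4 \<in> lmeasurable" unfolding S4eq by (rule measurable_translation[OF L4l])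
  have mL1: "measure lebesgue L1 = m" and mL2: "measure lebesgue L2 = m"
    and mL3: "measure lebesgue L3 = m" and mL4: "measure lebesgue L4 = m"
    using t unfolding L1_def L2_def L3_def L4_def m_def by simp_all
  have mS2: "measure lebesgue S2 = m" unfolding S2eq measure_translation by (rule mL2)
  have mS4: "measure lebesgue S4 = m" unfolding S4eq measure_translation by (rule mL4)
  have inL1: "x \<in> L1 \<longleftrightarrow> x \<in> R \<and> x \<le> t1" for x unfolding L1_def by auto
  have inL3: "x \<in> L3 \<longleftrightarrow> x \<in> R \<and> t2 < x \<and> x \<le> t3" for x unfolding L3_def by auto
  have inS2: "x \<in> S2 \<longleftrightarrow> x - 1/2 \<in> R \<and> t1 < x - 1/2 \<and> x - 1/2 \<le> t2" for x unfolding S2_def L2_def by auto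
  have inS4: "x \<in> S4 \<longleftrightarrow> x - 1/2 \<in> R \<and> t3 < x - 1/2" for x unfolding S4_def L4_def by auto
  have inR: "x \<in> R \<Longrightarrow> 0 < x \<and> x < 1/2" for x using R0 by auto
  define \<phi> :: "real \<Rightarrow> real" where "\<phi> x = (if x \<in> L1 then 1 else if x \<in> S2 then 1 else if x \<in> L3 then -1 else if x \<in> S4 then -1 else 0)" for x :: real
  have \<phi>_alt: "\<phi> x = indicator L1 x + indicator S2 x - indicator L3 x - indicator S4 x" for x
    unfolding \<phi>_def indicator_def using inL1 inL3 inS2 inS4 inR t by (auto; smt (verit))
  have pm: "\<phi> \<in> borel_measurable lebesgue"
    unfolding \<phi>_alt[abs_def] using L1l S2l L3l S4l by (auto intro!: borel_measurable_add borel_measurable_diff intro: fmeasurableD)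
  have pb: "\<bar>\<phi> x\<bar> \<le> 1" for x unfolding \<phi>_def by auto
  have sh01: "x \<in> {0..1}" if "x - 1/2 \<in> R" for x
    using inR[OF that] by simp
  have A01: "L1 \<subseteq> {0..1}" "S2 \<subseteq> {0..1}" "L3 \<subseteq> {0..1}" "S4 \<subseteq> {0..1}"
    using R01 inS2 inS4 sh01 unfolding L1_def L3_def by blast+
  have int0: "(LINT x:{0..1}|lebesgue. \<phi> x) = 0"
  proof -
    have i: "set_integrable lebesgue {0..1} (indicator S :: real \<Rightarrow> real)" if "S \<in> sets lebesgue" for S :: "real set"
      by (rule sint_bdd[where C=1, OF _ _ I01_fin]) (use that in \<open>auto simp: indicator_def\<close>)
    have sL1: "L1 \<in> sets lebesgue" and sS2: "S2 \<in> sets lebesgue" and sL3: "L3 \<in> sets lebesgue" and sS4: "S4 \<in> sets lebesgue"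
      using L1l S2l L3l S4l by (auto intro: fmeasurableD)
    have "(LINT x:{0..1}|lebesgue. \<phi> x) = (LINT x:{0..1}|lebesgue. indicator L1 x + indicator S2 x - indicator L3 x - indicator S4 x)"
      unfolding \<phi>_alt ..
    also have "\<dots> = (LINT x:{0..1}|lebesgue. indicator L1 x) + (LINT x:{0..1}|lebesgue. indicator S2 x)
        - (LINT x:{0..1}|lebesgue. indicator L3 x) - (LINT x:{0..1}|lebesgue. indicator S4 x)"
      using i[OF sL1] i[OF sS2] i[OF sL3] i[OF sS4] by (simp add: set_integral_add set_integral_diff)
    also have "\<dots> = 0"
      using sint_indicator[OF sL1 A01(1)] sint_indicator[OF sS2 A01(2)] sint_indicator[OF sL3 A01(3)] sint_indicator[OF sS4 A01(4)]
        mL1 mS2 mL3 mS4 by simp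
    finally show ?thesis .
  qed
  have rng: "0 \<le> \<theta> x + s * \<phi> x \<and> \<theta> x + s * \<phi> x \<le> 1" if "x \<in> {0..1}" "s = \<epsilon> \<or> s = -\<epsilon>" for x s
  proof (cases "\<phi> x = 0")
    case True then show ?thesis using tf(2)[OF that(1)] by simp
  next
    case False
    then have "x \<in> R \<or> x - 1/2 \<in> R" unfolding \<phi>_def using inL1 inL3 inS2 inS4 by (auto split: if_splits)
    then have "\<epsilon> \<le> \<theta> x \<and> \<theta> x \<le> 1 - \<epsilon>" using Rl Rr[of "x - 1/2"] by auto
    moreover have "\<bar>s * \<phi> x\<bar> \<le> \<epsilon>" using that(2) pb[of x] eps by (auto simp: abs_mult intro: mult_left_le)
    ultimately show ?thesis by (auto simp: abs_le_iff)
  qed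
  define g :: "real \<times> real \<Rightarrow> real" where "g z = indicator (L1 \<times> S2) z + indicator (S2 \<times> L1) z - indicator (L1 \<times> S4) z - indicator (S4 \<times> L1) z
      + indicator (L3 \<times> S4) z + indicator (S4 \<times> L3) z" for z
  have memb: "x \<in> L1 \<Longrightarrow> 0 < x \<and> x < 1/2 \<and> x \<le> t1"
    "x \<in> L3 \<Longrightarrow> 0 < x \<and> x < 1/2 \<and> t2 < x \<and> x \<le> t3"
    "x \<in> S2 \<Longrightarrow> 0 < x - 1/2 \<and> x - 1/2 < 1/2 \<and> t1 < x - 1/2 \<and> x - 1/2 \<le> t2"
    "x \<in> S4 \<Longrightarrow> 0 < x - 1/2 \<and> x - 1/2 < 1/2 \<and> t3 < x - 1/2" for x
    using inL1[of x] inL3[of x] inS2[of x] inS4[of x] inR[of x] inR[of "x - 1/2"] by auto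
  have excl: "x \<in> L1 \<Longrightarrow> x \<notin> S2" "x \<in> L1 \<Longrightarrow> x \<notin> L3" "x \<in> L1 \<Longrightarrow> x \<notin> S4"
    "x \<in> S2 \<Longrightarrow> x \<notin> L3" "x \<in> S2 \<Longrightarrow> x \<notin> S4" "x \<in> L3 \<Longrightarrow> x \<notin> S4" for x
    using memb[of x] t by (smt (verit))+
  have cls: "(x \<in> L1 \<and> x \<notin> S2 \<and> x \<notin> L3 \<and> x \<notin> S4) \<or> (x \<notin> L1 \<and> x \<in> S2 \<and> x \<notin> L3 \<and> x \<notin> S4)
    \<or> (x \<notin> L1 \<and> x \<notin> S2 \<and> x \<in> L3 \<and> x \<notin> S4) \<or> (x \<notin> L1 \<and> x \<notin> S2 \<and> x \<notin> L3 \<and> x \<in> S4)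
    \<or> (x \<notin> L1 \<and> x \<notin> S2 \<and> x \<notin> L3 \<and> x \<notin> S4)" for x
    using excl[of x] by blast
  have phv: "x \<in> L1 \<Longrightarrow> \<phi> x = 1" "x \<notin> L1 \<Longrightarrow> x \<in> S2 \<Longrightarrow> \<phi> x = 1"
    "x \<notin> L1 \<Longrightarrow> x \<notin> S2 \<Longrightarrow> x \<in> L3 \<Longrightarrow> \<phi> x = -1"
    "x \<notin> L1 \<Longrightarrow> x \<notin> S2 \<Longrightarrow> x \<notin> L3 \<Longrightarrow> x \<in> S4 \<Longrightarrow> \<phi> x = -1"
    "x \<notin> L1 \<Longrightarrow> x \<notin> S2 \<Longrightarrow> x \<notin> L3 \<Longrightarrow> x \<notin> S4 \<Longrightarrow> \<phi> x = 0" for x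
    unfolding \<phi>_def by simp_all
  have Wv: "x \<in> L1 \<Longrightarrow> y \<in> S2 \<Longrightarrow> halfW x y = 1" "x \<in> S2 \<Longrightarrow> y \<in> L1 \<Longrightarrow> halfW x y = 1"
    "x \<in> L1 \<Longrightarrow> y \<in> S4 \<Longrightarrow> halfW x y = 1" "x \<in> S4 \<Longrightarrow> y \<in> L1 \<Longrightarrow> halfW x y = 1"
    "x \<in> L3 \<Longrightarrow> y \<in> S4 \<Longrightarrow> halfW x y = 1" "x \<in> S4 \<Longrightarrow> y \<in> L3 \<Longrightarrow> halfW x y = 1"
    "x \<in> L3 \<Longrightarrow> y \<in> S2 \<Longrightarrow> halfW x y = 0" "x \<in> S2 \<Longrightarrow> y \<in> L3 \<Longrightarrow> halfW x y = 0"
    "x \<in> L1 \<Longrightarrow> y \<in> L1 \<Longrightarrow> halfW x y = 0" "x \<in> L1 \<Longrightarrow> y \<in> L3 \<Longrightarrow> halfW x y = 0"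
    "x \<in> L3 \<Longrightarrow> y \<in> L1 \<Longrightarrow> halfW x y = 0" "x \<in> L3 \<Longrightarrow> y \<in> L3 \<Longrightarrow> halfW x y = 0"
    "x \<in> S2 \<Longrightarrow> y \<in> S2 \<Longrightarrow> halfW x y = 0" "x \<in> S2 \<Longrightarrow> y \<in> S4 \<Longrightarrow> halfW x y = 0"
    "x \<in> S4 \<Longrightarrow> y \<in> S2 \<Longrightarrow> halfW x y = 0" "x \<in> S4 \<Longrightarrow> y \<in> S4 \<Longrightarrow> halfW x y = 0" for x y
    using memb[of x] memb[of y] t unfolding halfW_def by auto
  have ind01: "x \<in> L1 \<Longrightarrow> indicator {0..1} x = (1::real)" "x \<in> S2 \<Longrightarrow> indicator {0..1} x = (1::real)"
    "x \<in> L3 \<Longrightarrow> indicator {0..1} x = (1::real)" "x \<in> S4 \<Longrightarrow> indicator {0..1} x = (1::real)" for x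
    using A01 by (auto simp: indicator_def)
  have pw: "indicator Sq z * (halfW (fst z) (snd z) * \<phi> (fst z) * \<phi> (snd z)) = g z" for z
  proof -
    obtain x y where z: "z = (x, y)" by (cases z)
    show ?thesis unfolding z g_def fst_conv snd_conv indicator_times
      using cls[of x] cls[of y]
      by (elim disjE conjE; simp add: phv Wv ind01)
  qed
  have Qv: "QdT \<phi> = 2 * m * m"
  proof -
    have "QdT \<phi> = integral\<^sup>L M2 g"
      unfolding QdT_def set_lebesgue_integral_def using pw by simp
    also have "\<dots> = m * m + m * m - m * m - m * m + m * m + m * m"
      unfolding g_def
      using rect_int[OF L1l S2l] rect_int[OF S2l L1l] rect_int[OF L1l S4l] rect_int[OF S4l L1l]
        rect_int[OF L3l S4l] rect_int[OF S4l L3l] mL1 mS2 mL3 mS4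
      by simp
    finally show ?thesis by simp
  qed
  have Jp: "cutJ halfW \<theta> \<le> cutJ halfW (\<lambda>x. \<theta> x + \<epsilon> * \<phi> x)"
    using minH perturb_H[OF tH pm _ rng int0] pb by blast
  have Jm: "cutJ halfW \<theta> \<le> cutJ halfW (\<lambda>x. \<theta> x + (-\<epsilon>) * \<phi> x)"
    using minH perturb_H[OF tH pm _ rng int0] pb by blast
  have ep: "cutJ halfW (\<lambda>x. \<theta> x + \<epsilon> * \<phi> x) = cutJ halfW \<theta> + 8 * \<epsilon> * LinT \<theta> \<phi> - 8 * \<epsilon>^2 * QdT \<phi>"
    using cut_expand[OF tf(1) pm tb pb, of \<epsilon>] by simp
  have em: "cutJ halfW (\<lambda>x. \<theta> x + (-\<epsilon>) * \<phi> x) = cutJ halfW \<theta> - 8 * \<epsilon> * LinT \<theta> \<phi> - 8 * \<epsilon>^2 * QdT \<phi>"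
    using cut_expand[OF tf(1) pm tb pb, of "-\<epsilon>"] by simp
  have sum: "cutJ halfW (\<lambda>x. \<theta> x + \<epsilon> * \<phi> x) + cutJ halfW (\<lambda>x. \<theta> x + (-\<epsilon>) * \<phi> x)
      = 2 * cutJ halfW \<theta> - 16 * (\<epsilon>^2 * QdT \<phi>)"
    unfolding ep em by (simp add: algebra_simps)
  have "\<epsilon>^2 * QdT \<phi> \<le> 0" using Jp Jm sum by linarith
  moreover have "\<epsilon>^2 * QdT \<phi> > 0" using Qv m0 eps by simp
  ultimately show False by linarith
qed


lemma shift_meas:
  fixes f :: "real \<Rightarrow> real"
  assumes "f \<in> borel_measurable lebesgue"
  shows "(\<lambda>u. f (u + c)) \<in> borel_measurable lebesgue"
proof -
  have "(\<lambda>u::real. u + c) \<in> lebesgue \<rightarrow>\<^sub>M lebesgue"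
  proof (rule measurableI)
    fix A :: "real set" assume A: "A \<in> sets lebesgue"
    have "(\<lambda>u. u + c) -` A \<inter> space lebesgue = (\<lambda>x. - c + x) ` A"
      by (auto simp: image_iff algebra_simps)
    then show "(\<lambda>u. u + c) -` A \<inter> space lebesgue \<in> sets lebesgue"
      using lebesgue_sets_translation[OF A, of "-c"] by simp
  qed simp
  then show ?thesis using assms by (rule measurable_compose)
qed

lemma F_int:
  fixes \<theta> :: "real \<Rightarrow> real"
  assumes tH: "\<theta> \<in> bisectH" and S: "S \<in> sets lebesgue" "S \<subseteq> {0..1}"
  shows "set_integrable lebesgue S (\<lambda>y. 1 - 2 * \<theta> y)"
proof -
  note tf = H_facts[OF tH]
  show ?thesis
  proof (rule sint_bdd[where C=1])
    show "(\<lambda>y. 1 - 2 * \<theta> y) \<in> borel_measurable lebesgue" using tf(1) by measurable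
    show "emeasure lebesgue S < \<infinity>" by (rule fm_lt[OF lm01[OF S]])
    show "\<bar>1 - 2 * \<theta> x\<bar> \<le> 1" if "x \<in> S" for x
    proof -
      have "x \<in> {0..1}" using that S(2) by blast
      then have "0 \<le> \<theta> x \<and> \<theta> x \<le> 1" by (rule tf(2))
      then show ?thesis by auto
    qed
  qed (rule S(1))
qed

lemma Gf_left:
  assumes "x \<in> {0<..<1/2}"
  shows "Gf \<theta> x = (LINT y:{x+1/2..1}|lebesgue. 1 - 2 * \<theta> y)"
  unfolding Gf_def set_lebesgue_integral_def
proof (rule Bochner_Integration.integral_cong[OF refl])
  fix y :: real
  show "indicator {0..1} y *\<^sub>R (halfW x y * (1 - 2 * \<theta> y)) = indicator {x + 1/2..1} y *\<^sub>R (1 - 2 * \<theta> y)"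
    using assms by (auto simp: indicator_def halfW_def)
qed

lemma Gf_right:
  assumes "x \<in> {1/2<..<1}"
  shows "Gf \<theta> x = (LINT y:{0..x-1/2}|lebesgue. 1 - 2 * \<theta> y)"
  unfolding Gf_def set_lebesgue_integral_def
proof (rule Bochner_Integration.integral_cong[OF refl])
  fix y :: real
  show "indicator {0..1} y *\<^sub>R (halfW x y * (1 - 2 * \<theta> y)) = indicator {0..x-1/2} y *\<^sub>R (1 - 2 * \<theta> y)"
    using assms by (auto simp: indicator_def halfW_def)
qed

lemma Gf_rel_left:
  assumes tH: "\<theta> \<in> bisectH" and x: "x \<in> {0<..<1/2}" and y: "y \<in> {0<..<1/2}" and xy: "x \<le> y"
  shows "Gf \<theta> x - Gf \<theta> y = (LINT z:{x+1/2..<y+1/2}|lebesgue. 1 - 2 * \<theta> z)"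
proof -
  have e: "{x+1/2..<y+1/2} \<union> {y+1/2..1} = {x+1/2..1}" using x y xy by auto
  have "(LINT z:({x+1/2..<y+1/2} \<union> {y+1/2..1})|lebesgue. 1 - 2 * \<theta> z)
      = (LINT z:{x+1/2..<y+1/2}|lebesgue. 1 - 2 * \<theta> z) + (LINT z:{y+1/2..1}|lebesgue. 1 - 2 * \<theta> z)"
    by (rule set_integral_Un) (use x y in \<open>auto intro!: F_int[OF tH] simp: subset_iff\<close>)
  then show ?thesis unfolding e Gf_left[OF x] Gf_left[OF y] by simp
qed

lemma Gf_rel_right:
  assumes tH: "\<theta> \<in> bisectH" and x: "x \<in> {1/2<..<1}" and y: "y \<in> {1/2<..<1}" and xy: "x \<le> y"
  shows "Gf \<theta> x - Gf \<theta> y = (-1) * (LINT z:{x-1/2<..y-1/2}|lebesgue. 1 - 2 * \<theta> z)"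
proof -
  have e: "{0..x-1/2} \<union> {x-1/2<..y-1/2} = {0..y-1/2}" using x y xy by auto
  have "(LINT z:({0..x-1/2} \<union> {x-1/2<..y-1/2})|lebesgue. 1 - 2 * \<theta> z)
      = (LINT z:{0..x-1/2}|lebesgue. 1 - 2 * \<theta> z) + (LINT z:{x-1/2<..y-1/2}|lebesgue. 1 - 2 * \<theta> z)"
    by (rule set_integral_Un) (use x y in \<open>auto intro!: F_int[OF tH] simp: subset_iff\<close>)
  then show ?thesis unfolding e Gf_right[OF x] Gf_right[OF y] by simp
qed


lemma null_of_measure0:
  assumes "(S::real set) \<in> sets lebesgue" "S \<subseteq> {0..1}" "measure lebesgue S = 0"
  shows "S \<in> null_sets lebesgue"
proof -
  have "emeasure lebesgue S = 0" using emeasure_eq_measure2[OF lm01[OF assms(1,2)]] assms(3) by simp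
  then show ?thesis using assms(1) by (intro null_setsI)
qed

lemma left_null:
  fixes \<theta> :: "real \<Rightarrow> real"
  assumes tH: "\<theta> \<in> bisectH" and minH: "\<forall>\<psi>\<in>bisectH. cutJ halfW \<theta> \<le> cutJ halfW \<psi>"
    and eps: "0 < \<epsilon>" "\<epsilon> \<le> 1/3"
  shows "{x \<in> {0<..<1/2}. \<epsilon> \<le> \<theta> x \<and> \<theta> x \<le> 1 - \<epsilon>} \<in> null_sets lebesgue"
proof -
  note tf = H_facts[OF tH]
  have tb: "\<And>x. x \<in> {0..1} \<Longrightarrow> \<bar>\<theta> x\<bar> \<le> 1" using tf(2) by fastforce
  define E where "E = {x \<in> {0<..<1/2}. \<epsilon> \<le> \<theta> x \<and> \<theta> x \<le> 1 - \<epsilon>}"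
  have Em: "E \<in> sets lebesgue"
  proof -
    have "{x \<in> space lebesgue. \<epsilon> \<le> \<theta> x \<and> \<theta> x \<le> 1 - \<epsilon>} \<in> sets lebesgue" using tf(1) by measurable
    then have "{0<..<1/2} \<inter> {x \<in> space lebesgue. \<epsilon> \<le> \<theta> x \<and> \<theta> x \<le> 1 - \<epsilon>} \<in> sets lebesgue" by simp
    moreover have "{0<..<1/2} \<inter> {x \<in> space lebesgue. \<epsilon> \<le> \<theta> x \<and> \<theta> x \<le> 1 - \<epsilon>} = E" unfolding E_def by auto
    ultimately show ?thesis by simp
  qed
  have E01: "E \<subseteq> {0..1}" unfolding E_def by auto
  have Ein: "x \<in> E \<Longrightarrow> x \<in> {0<..<1/2}" for x unfolding E_def by auto
  have Fm: "(\<lambda>z. 1 - 2 * \<theta> z) \<in> borel_measurable lebesgue" using tf(1) by measurable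
  have AEh: "AE u in lebesgue. u \<in> E \<longrightarrow> 1 - 2 * \<theta> (u + 1/2) = 0"
  proof (rule diff_lemma[where E=E and G="Gf \<theta>" and F="\<lambda>z. 1 - 2 * \<theta> z" and \<tau>="1/2" and \<sigma>=1 and C=3
        and I="\<lambda>x y. {x+1/2..<y+1/2}"])
    show "E \<in> sets lebesgue" by (rule Em)
    show "E \<subseteq> {0..1}" by (rule E01)
    show "(\<lambda>z. 1 - 2 * \<theta> z) \<in> borel_measurable lebesgue" by (rule Fm)
    show "(\<lambda>u. 1 - 2 * \<theta> (u + 1/2)) \<in> borel_measurable lebesgue" using shift_meas[OF Fm, of "1/2"] by simp
    show "Gf \<theta> \<in> borel_measurable lebesgue" by (rule Gf_meas[OF tf(1)])
    show "\<bar>Gf \<theta> x\<bar> \<le> 3" for x by (rule Gf_bnd[OF tf(1) tb])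
    show "measure lebesgue B * (LINT x:A|lebesgue. Gf \<theta> x) = measure lebesgue A * (LINT x:B|lebesgue. Gf \<theta> x)"
      if "A \<subseteq> E" "B \<subseteq> E" "A \<in> sets lebesgue" "B \<in> sets lebesgue" for A B
    proof (rule exch_lemma[OF tH minH E01 _ _ eps(1) that])
      show "\<bar>x - y\<bar> < 1/2" if "x \<in> E" "y \<in> E" for x y
      proof -
        have "0 < x" "x < 1/2" "0 < y" "y < 1/2" using Ein[OF that(1)] Ein[OF that(2)] by auto
        then show ?thesis unfolding abs_less_iff by linarith
      qed
      show "\<epsilon> \<le> \<theta> x \<and> \<theta> x \<le> 1 - \<epsilon>" if "x \<in> E" for x using that unfolding E_def by auto
    qed
    show "Gf \<theta> x - Gf \<theta> y = 1 * (LINT z:{x+1/2..<y+1/2}|lebesgue. 1 - 2 * \<theta> z)"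
      if "x \<in> E" "y \<in> E" "x \<le> y" for x y
      using Gf_rel_left[OF tH Ein[OF that(1)] Ein[OF that(2)] that(3)] by simp
    show "(1::real) = 1 \<or> (1::real) = -1" by simp
    show "{x+1/2<..<y+1/2} \<subseteq> {x+1/2..<y+1/2} \<and> {x+1/2..<y+1/2} \<subseteq> {x+1/2..y+1/2} \<and> {x+1/2..<y+1/2} \<in> sets lebesgue"
      for x y :: real by auto
    show "\<bar>1 - 2 * \<theta> z\<bar> \<le> 1" if "x \<in> E" "y \<in> E" "x \<le> y" "z \<in> {x+1/2..<y+1/2}" for x y z
    proof -
      have "z \<in> {0..1}" using Ein[OF that(1)] Ein[OF that(2)] that(4) by auto
      then have "0 \<le> \<theta> z \<and> \<theta> z \<le> 1" by (rule tf(2))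
      then show ?thesis by auto
    qed
  qed
  define R where "R = {u \<in> E. \<theta> (u + 1/2) = 1/2}"
  have sh: "(\<lambda>u. \<theta> (u + 1/2)) \<in> borel_measurable lebesgue" by (rule shift_meas[OF tf(1)])
  have Rm: "R \<in> sets lebesgue"
  proof -
    have "{u \<in> space lebesgue. \<theta> (u + 1/2) = 1/2} \<in> sets lebesgue" using sh by measurable
    then have "E \<inter> {u \<in> space lebesgue. \<theta> (u + 1/2) = 1/2} \<in> sets lebesgue" using Em by blast
    moreover have "E \<inter> {u \<in> space lebesgue. \<theta> (u + 1/2) = 1/2} = R" unfolding R_def by auto
    ultimately show ?thesis by simp
  qed
  have ERm: "E - R \<in> sets lebesgue" using Em Rm by blast
  have ERnull: "E - R \<in> null_sets lebesgue"
  proof -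
    have "{u \<in> space lebesgue. \<not> (u \<in> E \<longrightarrow> 1 - 2 * \<theta> (u + 1/2) = 0)} = E - R"
      unfolding R_def by auto
    then have "emeasure lebesgue (E - R) = 0" using iffD1[OF AE_iff_measurable[OF ERm] AEh] by blast
    then show ?thesis using ERm by (intro null_setsI)
  qed
  have mER: "measure lebesgue E = measure lebesgue R"
  proof -
    have "measure lebesgue (E - (E - R)) = measure lebesgue E" by (rule measure_Diff_null_set[OF Em ERnull])
    moreover have "E - (E - R) = R" unfolding R_def by auto
    ultimately show ?thesis by simp
  qed
  have "measure lebesgue E = 0"
  proof (rule ccontr)
    assume "measure lebesgue E \<noteq> 0"
    then have Rpos: "measure lebesgue R > 0" using mER measure_nonneg[of lebesgue R] by linarith
    show False
    proof (rule final_contra[OF tH minH Rm _ Rpos eps(1)])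
      show "R \<subseteq> {0<..<1/2}" unfolding R_def E_def by auto
      show "\<epsilon> \<le> \<theta> u \<and> \<theta> u \<le> 1 - \<epsilon>" if "u \<in> R" for u using that unfolding R_def E_def by auto
      show "\<epsilon> \<le> \<theta> (u + 1/2) \<and> \<theta> (u + 1/2) \<le> 1 - \<epsilon>" if "u \<in> R" for u using that eps unfolding R_def by auto
    qed
  qed
  then show ?thesis unfolding E_def[symmetric] by (rule null_of_measure0[OF Em E01])
qed


lemma right_null:
  fixes \<theta> :: "real \<Rightarrow> real"
  assumes tH: "\<theta> \<in> bisectH" and minH: "\<forall>\<psi>\<in>bisectH. cutJ halfW \<theta> \<le> cutJ halfW \<psi>"
    and eps: "0 < \<epsilon>" "\<epsilon> \<le> 1/3"
  shows "{x \<in> {1/2<..<1}. \<epsilon> \<le> \<theta> x \<and> \<theta> x \<le> 1 - \<epsilon>} \<in> null_sets lebesgue"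
proof -
  note tf = H_facts[OF tH]
  have tb: "\<And>x. x \<in> {0..1} \<Longrightarrow> \<bar>\<theta> x\<bar> \<le> 1" using tf(2) by fastforce
  define E where "E = {x \<in> {1/2<..<1}. \<epsilon> \<le> \<theta> x \<and> \<theta> x \<le> 1 - \<epsilon>}"
  have Em: "E \<in> sets lebesgue"
  proof -
    have "{x \<in> space lebesgue. \<epsilon> \<le> \<theta> x \<and> \<theta> x \<le> 1 - \<epsilon>} \<in> sets lebesgue" using tf(1) by measurable
    then have "{1/2<..<1} \<inter> {x \<in> space lebesgue. \<epsilon> \<le> \<theta> x \<and> \<theta> x \<le> 1 - \<epsilon>} \<in> sets lebesgue" by simp
    moreover have "{1/2<..<1} \<inter> {x \<in> space lebesgue. \<epsilon> \<le> \<theta> x \<and> \<theta> x \<le> 1 - \<epsilon>} = E" unfolding E_def by auto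
    ultimately show ?thesis by simp
  qed
  have E01: "E \<subseteq> {0..1}" unfolding E_def by auto
  have Ein: "x \<in> E \<Longrightarrow> x \<in> {1/2<..<1}" for x unfolding E_def by auto
  have Fm: "(\<lambda>z. 1 - 2 * \<theta> z) \<in> borel_measurable lebesgue" using tf(1) by measurable
  have AEh: "AE u in lebesgue. u \<in> E \<longrightarrow> 1 - 2 * \<theta> (u + - (1/2)) = 0"
  proof (rule diff_lemma[where E=E and G="Gf \<theta>" and F="\<lambda>z. 1 - 2 * \<theta> z" and \<tau>="- (1/2)" and \<sigma>="-1" and C=3
        and I="\<lambda>x y. {x-1/2<..y-1/2}"])
    show "E \<in> sets lebesgue" by (rule Em)
    show "E \<subseteq> {0..1}" by (rule E01)
    show "(\<lambda>z. 1 - 2 * \<theta> z) \<in> borel_measurable lebesgue" by (rule Fm)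
    show "(\<lambda>u. 1 - 2 * \<theta> (u + - (1/2))) \<in> borel_measurable lebesgue" using shift_meas[OF Fm, of "- (1/2)"] by simp
    show "Gf \<theta> \<in> borel_measurable lebesgue" by (rule Gf_meas[OF tf(1)])
    show "\<bar>Gf \<theta> x\<bar> \<le> 3" for x by (rule Gf_bnd[OF tf(1) tb])
    show "measure lebesgue B * (LINT x:A|lebesgue. Gf \<theta> x) = measure lebesgue A * (LINT x:B|lebesgue. Gf \<theta> x)"
      if "A \<subseteq> E" "B \<subseteq> E" "A \<in> sets lebesgue" "B \<in> sets lebesgue" for A B
    proof (rule exch_lemma[OF tH minH E01 _ _ eps(1) that])
      show "\<bar>x - y\<bar> < 1/2" if "x \<in> E" "y \<in> E" for x y
      proof -
        have "1/2 < x" "x < 1" "1/2 < y" "y < 1" using Ein[OF that(1)] Ein[OF that(2)] by auto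
        then show ?thesis unfolding abs_less_iff by linarith
      qed
      show "\<epsilon> \<le> \<theta> x \<and> \<theta> x \<le> 1 - \<epsilon>" if "x \<in> E" for x using that unfolding E_def by auto
    qed
    show "Gf \<theta> x - Gf \<theta> y = (-1) * (LINT z:{x-1/2<..y-1/2}|lebesgue. 1 - 2 * \<theta> z)"
      if "x \<in> E" "y \<in> E" "x \<le> y" for x y
      by (rule Gf_rel_right[OF tH Ein[OF that(1)] Ein[OF that(2)] that(3)])
    show "(-1::real) = 1 \<or> (-1::real) = -1" by simp
    show "{x + - (1/2)<..<y + - (1/2)} \<subseteq> {x-1/2<..y-1/2} \<and> {x-1/2<..y-1/2} \<subseteq> {x + - (1/2)..y + - (1/2)} \<and> {x-1/2<..y-1/2} \<in> sets lebesgue"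
      for x y :: real by auto
    show "\<bar>1 - 2 * \<theta> z\<bar> \<le> 1" if "x \<in> E" "y \<in> E" "x \<le> y" "z \<in> {x-1/2<..y-1/2}" for x y z
    proof -
      have "z \<in> {0..1}" using Ein[OF that(1)] Ein[OF that(2)] that(4) by auto
      then have "0 \<le> \<theta> z \<and> \<theta> z \<le> 1" by (rule tf(2))
      then show ?thesis by auto
    qed
  qed
  define R' where "R' = {u \<in> E. \<theta> (u + - (1/2)) = 1/2}"
  have sh: "(\<lambda>u. \<theta> (u + - (1/2))) \<in> borel_measurable lebesgue" by (rule shift_meas[OF tf(1)])
  have R'm: "R' \<in> sets lebesgue"
  proof -
    have "{u \<in> space lebesgue. \<theta> (u + - (1/2)) = 1/2} \<in> sets lebesgue" using sh by measurable
    then have "E \<inter> {u \<in> space lebesgue. \<theta> (u + - (1/2)) = 1/2} \<in> sets lebesgue" using Em by blast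
    moreover have "E \<inter> {u \<in> space lebesgue. \<theta> (u + - (1/2)) = 1/2} = R'" unfolding R'_def by auto
    ultimately show ?thesis by simp
  qed
  have ERm: "E - R' \<in> sets lebesgue" using Em R'm by blast
  have ERnull: "E - R' \<in> null_sets lebesgue"
  proof -
    have "{u \<in> space lebesgue. \<not> (u \<in> E \<longrightarrow> 1 - 2 * \<theta> (u + - (1/2)) = 0)} = E - R'"
      unfolding R'_def by auto
    then have "emeasure lebesgue (E - R') = 0" using iffD1[OF AE_iff_measurable[OF ERm] AEh] by blast
    then show ?thesis using ERm by (intro null_setsI)
  qed
  have mER: "measure lebesgue E = measure lebesgue R'"
  proof -
    have "measure lebesgue (E - (E - R')) = measure lebesgue E" by (rule measure_Diff_null_set[OF Em ERnull])
    moreover have "E - (E - R') = R'" unfolding R'_def by auto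
    ultimately show ?thesis by simp
  qed
  define R where "R = (+) (- (1/2)) ` R'"
  have Rm: "R \<in> sets lebesgue" unfolding R_def using lebesgue_sets_translation[OF R'm, of "- (1/2)"] by simp
  have mR: "measure lebesgue R = measure lebesgue R'" unfolding R_def by (rule measure_translation)
  have "measure lebesgue E = 0"
  proof (rule ccontr)
    assume "measure lebesgue E \<noteq> 0"
    then have Rpos: "measure lebesgue R > 0" using mER mR measure_nonneg[of lebesgue R] by linarith
    show False
    proof (rule final_contra[OF tH minH Rm _ Rpos eps(1)])
      show "R \<subseteq> {0<..<1/2}" unfolding R_def R'_def E_def by auto
      show "\<epsilon> \<le> \<theta> v \<and> \<theta> v \<le> 1 - \<epsilon>" if vR: "v \<in> R" for v
      proof -
        obtain u where u: "u \<in> R'" "v = - (1/2) + u" using vR unfolding R_def by blast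
        then have "\<theta> v = 1/2" unfolding R'_def by (simp add: add.commute)
        then show ?thesis using eps by simp
      qed
      show "\<epsilon> \<le> \<theta> (v + 1/2) \<and> \<theta> (v + 1/2) \<le> 1 - \<epsilon>" if vR: "v \<in> R" for v
      proof -
        obtain u where u: "u \<in> R'" "v = - (1/2) + u" using vR unfolding R_def by blast
        then have "v + 1/2 = u" by simp
        then show ?thesis using u(1) unfolding R'_def E_def by auto
      qed
    qed
  qed
  then show ?thesis unfolding E_def[symmetric] by (rule null_of_measure0[OF Em E01])
qed


theorem mainTheorem9:
  assumes "\<theta> \<in> bisectH"
      and "\<forall>\<phi>\<in>bisectH. cutJ halfW \<theta> \<le> cutJ halfW \<phi>"
  shows "AE x in lebesgue. x \<in> {0..1} \<longrightarrow> \<theta> x \<in> {0, 1}"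
proof -
  note tH = assms(1) and minH = assms(2)
  note tf = H_facts[OF tH]
  define ep where "ep n = 1 / (real n + 3)" for n :: nat
  have ep: "0 < ep n" "ep n \<le> 1/3" for n unfolding ep_def by (auto simp: field_simps)
  define N where "N = {0, 1/2, 1} \<union> (\<Union>n. {x \<in> {0<..<1/2}. ep n \<le> \<theta> x \<and> \<theta> x \<le> 1 - ep n})
      \<union> (\<Union>n. {x \<in> {1/2<..<1}. ep n \<le> \<theta> x \<and> \<theta> x \<le> 1 - ep n})"
  have fin: "{0, 1/2, 1::real} \<in> null_sets lebesgue"
    using negligible_iff_null_sets negligible_finite[of "{0, 1/2, 1::real}"] by simp
  have Nnull: "N \<in> null_sets lebesgue"
    unfolding N_def
    using fin left_null[OF tH minH ep] right_null[OF tH minH ep]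
    by (intro null_sets.Un null_sets_UN) auto
  show ?thesis
  proof (rule AE_I'[OF Nnull], rule subsetI)
    fix x assume "x \<in> {x \<in> space lebesgue. \<not> (x \<in> {0..1} \<longrightarrow> \<theta> x \<in> {0, 1})}"
    then have x01: "x \<in> {0..1}" and tx: "\<theta> x \<noteq> 0" "\<theta> x \<noteq> 1" by auto
    have "0 \<le> \<theta> x \<and> \<theta> x \<le> 1" by (rule tf(2)[OF x01])
    then have tx': "0 < \<theta> x" "\<theta> x < 1" using tx by auto
    then have "0 < min (\<theta> x) (1 - \<theta> x)" by simp
    then obtain n where n: "1 / real (Suc n) < min (\<theta> x) (1 - \<theta> x)"
      by (metis nat_approx_posE)
    have "ep n \<le> 1 / real (Suc n)" unfolding ep_def by (auto simp: field_simps)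
    then have bnds: "ep n \<le> \<theta> x \<and> \<theta> x \<le> 1 - ep n" using n by auto
    show "x \<in> N"
    proof (cases "x = 0 \<or> x = 1/2 \<or> x = 1")
      case True then show ?thesis unfolding N_def by auto
    next
      case False
      then have "x \<in> {0<..<1/2} \<or> x \<in> {1/2<..<1}" using x01 by auto
      then show ?thesis unfolding N_def using bnds by blast
    qed
  qed
qed

end
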